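(* Let $G$ be a finite group and $p$ a prime. The categories $\mathcal S^*_G,\mathcal T^*_G,\mathcal L^*_G,\mathcal F^*_G,\widetilde{\mathcal F}^*_G,\mathcal O^*_G$ have Euler characteristics in the sense of Leinster, and \[ \chi(\mathcal C^* )=\sum_{[H]}\frac{-\mu(H)}{|\mathcal C^*(H)|},\qquad \mathcal C^*=\mathcal T^*_G,\ \mathcal L^*_G,\ \mathcal F^*_G, \] where the sum runs over the set of $G$-conjugacy classes $[H]$ of nonidentity $p$-subgroups $H$ of $G$. Moreover $\chi(\mathcal S^*_G)=|G|\,\chi(\mathcal T^*_G)$, $\chi(\widetilde{\mathcal F}^*_G)=\chi(\mathcal F^*_G)$, and \[ \chi(\mathcal O^*_G)=\chi(\mathcal T^*_G)+\frac{p-1}{p}\sum_{[C]\text{ cyclic}}\frac{1}{|\mathcal O^*_G(C)|}, \] where the last sum runs over the set of $G$-conjugacy classes of nonidentity cyclic $p$-subgroups $C$ of $G$.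
   Context: For subgroups $H,K\le G$ and $g\in G$ write $H^g=g^{-1}Hg$ and $N_G(H,K)=\{g\in G: H^g\le K\}$. For a finite group $X$, $O^p(X)$ is the smallest normal subgroup of $X$ whose quotient is a $p$-group. The following categories all have as objects the nonidentity $p$-subgroups of $G$, with composition induced by multiplication in $G$: the poset $\mathcal S^*_G$ (exactly one morphism $H\to K$ if $H\le K$, none otherwise); $\mathcal T^*_G(H,K)=N_G(H,K)$; $\mathcal L^*_G(H,K)=O^p(C_G(H))\backslash N_G(H,K)$; $\mathcal F^*_G(H,K)=C_G(H)\backslash N_G(H,K)$; $\mathcal O^*_G(H,K)=N_G(H,K)/K$; $\widetilde{\mathcal F}^*_G(H,K)=C_G(H)\backslash N_G(H,K)/K$ (double cosets). For a category $\mathcal C$, $\mathcal C(H)=\mathcal C(H,H)$; so e.g. $\mathcal T^*_G(H)=N_G(H)$, $\mathcal L^*_G(H)=O^p(C_G(H))\backslash N_G(H)$, $\mathcal F^*_G(H)=C_G(H)\backslash N_G(H)$, $\mathcal O^*_G(H)=N_G(H)/H$. Leinster Euler characteristic: for a finite category $\mathcal C$ let $\zeta(a,b)=|\mathcal C(a,b)|$. A weighting is a function $k^\bullet:\mathrm{Ob}(\mathcal C)\to\mathbb Q$ with $\sum_b\zeta(a,b)k^b=1$ for every object $a$; a coweighting is $k_\bullet:\mathrm{Ob}(\mathcal C)\to\mathbb Q$ with $\sum_a k_a\zeta(a,b)=1$ for every object $b$. If $\mathcal C$ admits both, it has Euler characteristic $\chi(\mathcal C)=\sum_b k^b=\sum_a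 k_a$ (independent of the choices). $\mu(H,K)$ denotes the Möbius function of the poset of all subgroups of $G$ ($\mu(H,H)=1$, $\mu(H,K)=-\sum_{H\le L<K}\mu(H,L)$ if $H<K$, $\mu(H,K)=0$ if $H\not\le K$), and $\mu(K)=\mu(1,K)$. *)

theory Defs
  imports "HOL-Algebra.Algebra"
begin

definition conj_set :: "('a,'b) monoid_scheme \<Rightarrow> 'a set \<Rightarrow> 'a \<Rightarrow> 'a set" where
  "conj_set G H g = {inv\<^bsub>G\<^esub> g \<otimes>\<^bsub>G\<^esub> h \<otimes>\<^bsub>G\<^esub> g | h. h \<in> H}"

definition transporter :: "('a,'b) monoid_scheme \<Rightarrow> 'a set \<Rightarrow> 'a set \<Rightarrow> 'a set" where
  "transporter G H K = {g \<in> carrier G. conj_set G H g \<subseteq> K}"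

definition centralizer_of :: "('a,'b) monoid_scheme \<Rightarrow> 'a set \<Rightarrow> 'a set" where
  "centralizer_of G H = {g \<in> carrier G. \<forall>h\<in>H. g \<otimes>\<^bsub>G\<^esub> h = h \<otimes>\<^bsub>G\<^esub> g}"

definition is_p_power :: "nat \<Rightarrow> nat \<Rightarrow> bool" where
  "is_p_power p n \<longleftrightarrow> (\<exists>k. n = p ^ k)"

text \<open>O^p(X) for a subgroup Y of G: the smallest normal subgroup N of Y with Y/N a p-group,
  i.e. the intersection of all such N.\<close>
definition Op :: "('a,'b) monoid_scheme \<Rightarrow> nat \<Rightarrow> 'a set \<Rightarrow> 'a set" where
  "Op G p Y = Inter {N. subgroup N G \<and> N \<subseteq> Y \<and>
       (\<forall>x\<in>Y. \<forall>n\<in>N. x \<otimes>\<^bsub>G\<^esub> n \<otimes>\<^bsub>G\<^esub> inv\<^bsub>G\<^esub> x \<in> N) \<and>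
       is_p_power p (card Y div card N) \<and> card N dvd card Y}"

definition nonid_p_subgroups :: "('a,'b) monoid_scheme \<Rightarrow> nat \<Rightarrow> 'a set set" where
  "nonid_p_subgroups G p =
     {H. subgroup H G \<and> H \<noteq> {\<one>\<^bsub>G\<^esub>} \<and> is_p_power p (card H)}"

definition cyclic_subgroup :: "('a,'b) monoid_scheme \<Rightarrow> 'a set \<Rightarrow> bool" where
  "cyclic_subgroup G H \<longleftrightarrow> subgroup H G \<and> (\<exists>g\<in>carrier G. H = generate G {g})"

definition conj_class :: "('a,'b) monoid_scheme \<Rightarrow> 'a set \<Rightarrow> 'a set set" where
  "conj_class G H = {conj_set G H g | g. g \<in> carrier G}"

definition conj_classes :: "('a,'b) monoid_scheme \<Rightarrow> 'a set set \<Rightarrow> 'a set set set" where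
  "conj_classes G S = conj_class G ` S"

definition sum_classes :: "('a,'b) monoid_scheme \<Rightarrow> 'a set set \<Rightarrow> ('a set \<Rightarrow> rat) \<Rightarrow> rat" where
  "sum_classes G S f = (\<Sum>Cl\<in>conj_classes G S. f (SOME H. H \<in> Cl \<and> H \<in> S))"

definition homS :: "'a set \<Rightarrow> 'a set \<Rightarrow> unit set" where
  "homS H K = (if H \<subseteq> K then {()} else {})"

definition homT :: "('a,'b) monoid_scheme \<Rightarrow> 'a set \<Rightarrow> 'a set \<Rightarrow> 'a set" where
  "homT G H K = transporter G H K"

definition homL :: "('a,'b) monoid_scheme \<Rightarrow> nat \<Rightarrow> 'a set \<Rightarrow> 'a set \<Rightarrow> 'a set set" where
  "homL G p H K = (\<lambda>g. Op G p (centralizer_of G H) #>\<^bsub>G\<^esub> g) ` transporter G H K"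

definition homF :: "('a,'b) monoid_scheme \<Rightarrow> 'a set \<Rightarrow> 'a set \<Rightarrow> 'a set set" where
  "homF G H K = (\<lambda>g. centralizer_of G H #>\<^bsub>G\<^esub> g) ` transporter G H K"

definition homO :: "('a,'b) monoid_scheme \<Rightarrow> 'a set \<Rightarrow> 'a set \<Rightarrow> 'a set set" where
  "homO G H K = (\<lambda>g. g <#\<^bsub>G\<^esub> K) ` transporter G H K"

definition homFt :: "('a,'b) monoid_scheme \<Rightarrow> 'a set \<Rightarrow> 'a set \<Rightarrow> 'a set set" where
  "homFt G H K = (\<lambda>g. (centralizer_of G H #>\<^bsub>G\<^esub> g) <#>\<^bsub>G\<^esub> K) ` transporter G H K"

section \<open>Leinster Euler characteristic (depends only on zeta(a,b) = |C(a,b)|)\<close>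

definition is_weighting :: "'o set \<Rightarrow> ('o \<Rightarrow> 'o \<Rightarrow> nat) \<Rightarrow> ('o \<Rightarrow> rat) \<Rightarrow> bool" where
  "is_weighting Ob \<zeta> k \<longleftrightarrow> (\<forall>a\<in>Ob. (\<Sum>b\<in>Ob. of_nat (\<zeta> a b) * k b) = 1)"

definition is_coweighting :: "'o set \<Rightarrow> ('o \<Rightarrow> 'o \<Rightarrow> nat) \<Rightarrow> ('o \<Rightarrow> rat) \<Rightarrow> bool" where
  "is_coweighting Ob \<zeta> k \<longleftrightarrow> (\<forall>b\<in>Ob. (\<Sum>a\<in>Ob. k a * of_nat (\<zeta> a b)) = 1)"

definition has_euler_char :: "'o set \<Rightarrow> ('o \<Rightarrow> 'o \<Rightarrow> nat) \<Rightarrow> bool" where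
  "has_euler_char Ob \<zeta> \<longleftrightarrow> finite Ob \<and> (\<exists>k. is_weighting Ob \<zeta> k) \<and> (\<exists>k. is_coweighting Ob \<zeta> k)"

definition euler_char :: "'o set \<Rightarrow> ('o \<Rightarrow> 'o \<Rightarrow> nat) \<Rightarrow> rat" where
  "euler_char Ob \<zeta> = (\<Sum>b\<in>Ob. (SOME k. is_weighting Ob \<zeta> k) b)"

function mobius :: "('a,'b) monoid_scheme \<Rightarrow> 'a set \<Rightarrow> 'a set \<Rightarrow> int" where
  "mobius G H K =
     (if finite (carrier G) \<and> subgroup H G \<and> subgroup K G \<and> H \<subseteq> K then
        (if H = K then 1
         else - (\<Sum>L\<in>{L. subgroup L G \<and> H \<subseteq> L \<and> L \<subset> K}. mobius G H L))
      else 0)"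
  by auto
termination
proof (relation "measure (\<lambda>(G,H,K). card K)")
  show "wf (measure (\<lambda>(G,H,K). card K))" by simp
next
  fix G :: "('a,'b) monoid_scheme" and H K L
  assume a: "finite (carrier G) \<and> subgroup H G \<and> subgroup K G \<and> H \<subseteq> K"
     and L: "L \<in> {L. subgroup L G \<and> H \<subseteq> L \<and> L \<subset> K}"
  have "finite K" using a subgroup.subset finite_subset by metis
  then show "((G, H, L), G, H, K) \<in> measure (\<lambda>(G, H, K). card K)"
    using L by (simp add: psubset_card_mono)
qed

definition mobius1 :: "('a,'b) monoid_scheme \<Rightarrow> 'a set \<Rightarrow> int" where
  "mobius1 G K = mobius G {\<one>\<^bsub>G\<^esub>} K"

end

theory Submission
  imports Defs "HOL-Number_Theory.Totient"
begin


lemma weight_coweight_sum: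
  assumes fin: "finite Ob" and w: "is_weighting Ob z k" and c: "is_coweighting Ob z c"
  shows "(\<Sum>b\<in>Ob. k b) = (\<Sum>a\<in>Ob. c a)"
proof -
  have "(\<Sum>b\<in>Ob. k b) = (\<Sum>b\<in>Ob. (\<Sum>a\<in>Ob. c a * of_nat (z a b)) * k b)"
    using c unfolding is_coweighting_def by simp
  also have "\<dots> = (\<Sum>a\<in>Ob. c a * (\<Sum>b\<in>Ob. of_nat (z a b) * k b))"
    unfolding sum_distrib_left sum_distrib_right by (subst sum.swap) (simp add: mult.assoc mult.commute mult.left_commute)
  also have "\<dots> = (\<Sum>a\<in>Ob. c a)"
    using w unfolding is_weighting_def by simp
  finally show ?thesis .
qed

lemma euler_char_eq:
  assumes fin: "finite Ob" and w: "is_weighting Ob z k" and c: "is_coweighting Ob z c"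
  shows "has_euler_char Ob z" "euler_char Ob z = (\<Sum>a\<in>Ob. c a)"
proof -
  show "has_euler_char Ob z" using assms unfolding has_euler_char_def by blast
  have "is_weighting Ob z (SOME k. is_weighting Ob z k)" using w by (rule someI[where P="is_weighting Ob z"])
  then show "euler_char Ob z = (\<Sum>a\<in>Ob. c a)"
    unfolding euler_char_def using weight_coweight_sum[OF fin _ c] by blast
qed

lemma class_sum_trick:
  fixes f k :: "'o \<Rightarrow> rat"
  assumes fin: "finite Ob"
  and refl: "\<And>a. a\<in>Ob \<Longrightarrow> R a a"
  and sym: "\<And>a b. a\<in>Ob \<Longrightarrow> b\<in>Ob \<Longrightarrow> R a b \<Longrightarrow> R b a"
  and trans: "\<And>a b c. a\<in>Ob \<Longrightarrow> b\<in>Ob \<Longrightarrow> c\<in>Ob \<Longrightarrow> R a b \<Longrightarrow> R b c \<Longrightarrow> R a c"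
  and kc: "\<And>a b. a\<in>Ob \<Longrightarrow> b\<in>Ob \<Longrightarrow> R a b \<Longrightarrow> k a = k b"
  shows "(\<Sum>b\<in>Ob. f b * k b)
     = (\<Sum>b\<in>Ob. k b / of_nat (card {b'\<in>Ob. R b b'}) * (\<Sum>b'\<in>{b'\<in>Ob. R b b'}. f b'))"
proof -
  define cl where "cl b = {b'\<in>Ob. R b b'}" for b
  have clfin: "finite (cl b)" for b using fin unfolding cl_def by auto
  have cleq: "cl b = cl b'" if "b\<in>Ob" "b'\<in>Ob" "R b b'" for b b'
    using that sym trans unfolding cl_def by blast
  have clpos: "card (cl b) > 0" if "b \<in> Ob" for b
    using that refl clfin by (auto simp: cl_def card_gt_0_iff)
  have "(\<Sum>b\<in>Ob. k b / of_nat (card (cl b)) * (\<Sum>b'\<in>cl b. f b'))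
      = (\<Sum>b\<in>Ob. \<Sum>b'\<in>Ob. (if R b b' then k b / of_nat (card (cl b)) * f b' else 0))"
    unfolding cl_def by (auto simp: sum.inter_filter[OF fin] sum_distrib_left intro!: sum.cong)
  also have "\<dots> = (\<Sum>b\<in>Ob. \<Sum>b'\<in>Ob. (if R b b' then k b' / of_nat (card (cl b')) * f b' else 0))"
    by (intro sum.cong HOL.refl) (auto simp: cleq kc)
  also have "\<dots> = (\<Sum>b'\<in>Ob. \<Sum>b\<in>Ob. (if R b b' then k b' / of_nat (card (cl b')) * f b' else 0))"
    by (rule sum.swap)
  also have "\<dots> = (\<Sum>b'\<in>Ob. of_nat (card {b\<in>Ob. R b b'}) * (k b' / of_nat (card (cl b')) * f b'))"
    by (simp add: sum.If_cases fin Int_def)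
  also have "\<dots> = (\<Sum>b'\<in>Ob. f b' * k b')"
  proof (rule sum.cong[OF HOL.refl])
    fix b' assume b': "b' \<in> Ob"
    have "{b\<in>Ob. R b b'} = cl b'" unfolding cl_def using sym b' by blast
    then show "of_nat (card {b\<in>Ob. R b b'}) * (k b' / of_nat (card (cl b')) * f b') = f b' * k b'"
      using clpos[OF b'] by simp
  qed
  finally show ?thesis unfolding cl_def by simp
qed

lemma weighting_exists:
  fixes Ob :: "'o set" and z :: "'o \<Rightarrow> 'o \<Rightarrow> nat" and R and r :: "'o \<Rightarrow> nat"
  assumes "finite Ob"
  and "\<And>a. a\<in>Ob \<Longrightarrow> R a a"
  and "\<And>a b. a\<in>Ob \<Longrightarrow> b\<in>Ob \<Longrightarrow> R a b \<Longrightarrow> R b a"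
  and "\<And>a b c. a\<in>Ob \<Longrightarrow> b\<in>Ob \<Longrightarrow> c\<in>Ob \<Longrightarrow> R a b \<Longrightarrow> R b c \<Longrightarrow> R a c"
  and "\<And>a b. a\<in>Ob \<Longrightarrow> b\<in>Ob \<Longrightarrow> R a b \<Longrightarrow> r a = r b"
  and "\<And>a b. a\<in>Ob \<Longrightarrow> b\<in>Ob \<Longrightarrow> z a b \<noteq> 0 \<Longrightarrow> r a \<le> r b \<and> (r a = r b \<longrightarrow> R a b)"
  and "\<And>a a' b. a\<in>Ob \<Longrightarrow> a'\<in>Ob \<Longrightarrow> b\<in>Ob \<Longrightarrow> R a a' \<Longrightarrow>
          (\<Sum>b'\<in>{b'\<in>Ob. R b b'}. z a b') = (\<Sum>b'\<in>{b'\<in>Ob. R b b'}. z a' b')"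
  and "\<And>a. a\<in>Ob \<Longrightarrow> z a a > 0"
  shows "\<exists>k. is_weighting Ob z k \<and> (\<forall>a\<in>Ob. \<forall>b\<in>Ob. R a b \<longrightarrow> k a = k b)"
  using assms
proof (induction "card Ob" arbitrary: Ob rule: less_induct)
  case less
  note fin = less.prems(1) and refl = less.prems(2) and sym = less.prems(3)
    and trans = less.prems(4) and rR = less.prems(5) and tri = less.prems(6)
    and inv = less.prems(7) and pos = less.prems(8)
  show ?case
  proof (cases "Ob = {}")
    case True
    then show ?thesis unfolding is_weighting_def by auto
  next
    case False
    have "Min (r ` Ob) \<in> r ` Ob" using False fin by (intro Min_in) auto
    then obtain a0 where a0: "a0 \<in> Ob" "r a0 = Min (r ` Ob)" by auto
    have a0min: "r a0 \<le> r a" if "a \<in> Ob" for a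
      using a0(2) fin that by simp
    define A0 where "A0 = {b\<in>Ob. R a0 b}"
    define Ob' where "Ob' = Ob - A0"
    have A0sub: "A0 \<subseteq> Ob" unfolding A0_def by auto
    have a0A0: "a0 \<in> A0" unfolding A0_def using a0 refl by auto
    have fin': "finite Ob'" using fin unfolding Ob'_def by auto
    have lt: "card Ob' < card Ob"
      unfolding Ob'_def using a0A0 A0sub fin by (intro psubset_card_mono) auto
    have notA0: "b' \<notin> A0" if "b \<in> Ob'" "b' \<in> Ob" "R b b'" for b b'
    proof
      assume "b' \<in> A0"
      then have "R a0 b'" unfolding A0_def by auto
      moreover have "R b' b" using sym that Ob'_def by auto
      ultimately have "R a0 b" using trans[of a0 b' b] a0 that Ob'_def by auto
      then show False using that unfolding Ob'_def A0_def by auto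
    qed
    have clsame: "{b'\<in>Ob'. R b b'} = {b'\<in>Ob. R b b'}" if "b \<in> Ob'" for b
      using notA0[OF that] unfolding Ob'_def by auto
    have refl': "\<And>a. a\<in>Ob' \<Longrightarrow> R a a" using refl unfolding Ob'_def by auto
    have sym': "\<And>a b. a\<in>Ob' \<Longrightarrow> b\<in>Ob' \<Longrightarrow> R a b \<Longrightarrow> R b a" using sym unfolding Ob'_def by auto
    have trans': "\<And>a b c. a\<in>Ob' \<Longrightarrow> b\<in>Ob' \<Longrightarrow> c\<in>Ob' \<Longrightarrow> R a b \<Longrightarrow> R b c \<Longrightarrow> R a c"
      using trans unfolding Ob'_def by (meson DiffD1)
    have "\<exists>k. is_weighting Ob' z k \<and> (\<forall>a\<in>Ob'. \<forall>b\<in>Ob'. R a b \<longrightarrow> k a = k b)"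
    proof (rule less.hyps[OF lt fin' refl' sym' trans'])
      show "\<And>a b. a\<in>Ob' \<Longrightarrow> b\<in>Ob' \<Longrightarrow> R a b \<Longrightarrow> r a = r b" using rR unfolding Ob'_def by auto
      show "\<And>a b. a\<in>Ob' \<Longrightarrow> b\<in>Ob' \<Longrightarrow> z a b \<noteq> 0 \<Longrightarrow> r a \<le> r b \<and> (r a = r b \<longrightarrow> R a b)"
        using tri unfolding Ob'_def by auto
      show "\<And>a a' b. a\<in>Ob' \<Longrightarrow> a'\<in>Ob' \<Longrightarrow> b\<in>Ob' \<Longrightarrow> R a a' \<Longrightarrow>
          (\<Sum>b'\<in>{b'\<in>Ob'. R b b'}. z a b') = (\<Sum>b'\<in>{b'\<in>Ob'. R b b'}. z a' b')"
        using inv clsame unfolding Ob'_def by auto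
      show "\<And>a. a\<in>Ob' \<Longrightarrow> z a a > 0" using pos unfolding Ob'_def by auto
    qed
    then obtain k' where k'w: "is_weighting Ob' z k'"
      and k'c: "\<forall>a\<in>Ob'. \<forall>b\<in>Ob'. R a b \<longrightarrow> k' a = k' b" by blast
    define S0 where "S0 = (\<Sum>b\<in>A0. z a0 b)"
    have S0pos: "S0 > 0"
    proof -
      have "z a0 a0 \<le> S0" unfolding S0_def
        using a0A0 fin A0sub finite_subset by (intro member_le_sum) auto
      then show ?thesis using pos[OF a0(1)] by simp
    qed
    define XX where "XX a = (\<Sum>b\<in>Ob'. of_nat (z a b) * k' b)" for a
    define t where "t = (1 - XX a0) / of_nat S0"
    define k where "k b = (if b \<in> A0 then t else k' b)" for b
    have split: "(\<Sum>b\<in>Ob. of_nat (z a b) * k b) = XX a + of_nat (\<Sum>b\<in>A0. z a b) * t" for a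
    proof -
      have "(\<Sum>b\<in>Ob. of_nat (z a b) * k b) = (\<Sum>b\<in>Ob'. of_nat (z a b) * k b) + (\<Sum>b\<in>A0. of_nat (z a b) * k b)"
        unfolding Ob'_def using sum.subset_diff[OF A0sub fin] by simp
      also have "(\<Sum>b\<in>Ob'. of_nat (z a b) * k b) = XX a"
        unfolding XX_def k_def Ob'_def by (intro sum.cong) auto
      also have "(\<Sum>b\<in>A0. of_nat (z a b) * k b) = of_nat (\<Sum>b\<in>A0. z a b) * t"
        unfolding k_def by (simp add: sum_distrib_right)
      finally show ?thesis .
    qed
    have "is_weighting Ob z k"
      unfolding is_weighting_def
    proof
      fix a assume a: "a \<in> Ob"
      show "(\<Sum>b\<in>Ob. of_nat (z a b) * k b) = 1"
      proof (cases "a \<in> A0")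
        case False
        then have aO': "a \<in> Ob'" unfolding Ob'_def using a by auto
        have "z a b = 0" if "b \<in> A0" for b
        proof (rule ccontr)
          assume "z a b \<noteq> 0"
          then have "r a \<le> r b \<and> (r a = r b \<longrightarrow> R a b)" using tri a that A0sub by auto
          moreover have "r b = r a0" using rR[of a0 b] that a0 unfolding A0_def by auto
          ultimately have "R a b" using a0min[OF a] by auto
          then have "R a0 a" using that sym[of a b] trans[of a0 b a] a a0 A0sub unfolding A0_def by auto
          then show False using False a unfolding A0_def by auto
        qed
        then have "(\<Sum>b\<in>A0. z a b) = 0" by simp
        moreover have "XX a = 1" using k'w aO' unfolding is_weighting_def XX_def by auto
        ultimately show ?thesis using split[of a] by simp
      next
        case True
        then have Ra: "R a0 a" unfolding A0_def by auto
        have eqA0: "(\<Sum>b\<in>A0. z a b) = S0"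
          using inv[OF a0(1) a a0(1) Ra] unfolding S0_def A0_def by simp
        have inner: "(\<Sum>b'\<in>{b'\<in>Ob'. R b b'}. z a b') = (\<Sum>b'\<in>{b'\<in>Ob'. R b b'}. z a0 b')"
          if b: "b \<in> Ob'" for b
          using inv[OF a0(1) a _ Ra, of b] b clsame[OF b] unfolding Ob'_def by auto
        have Xeq: "XX a = XX a0"
        proof -
          have "XX a = (\<Sum>b\<in>Ob'. k' b / of_nat (card {b'\<in>Ob'. R b b'}) * (\<Sum>b'\<in>{b'\<in>Ob'. R b b'}. of_nat (z a b')))"
            unfolding XX_def
            by (rule class_sum_trick[OF fin']) (fact refl', fact sym', fact trans', use k'c in blast)
          also have "\<dots> = (\<Sum>b\<in>Ob'. k' b / of_nat (card {b'\<in>Ob'. R b b'}) * (\<Sum>b'\<in>{b'\<in>Ob'. R b b'}. of_nat (z a0 b')))"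
            by (rule sum.cong[OF HOL.refl]) (simp only: of_nat_sum[symmetric] inner)
          also have "\<dots> = XX a0"
            unfolding XX_def
            by (rule class_sum_trick[OF fin', symmetric]) (fact refl', fact sym', fact trans', use k'c in blast)
          finally show ?thesis .
        qed
        show ?thesis using split[of a] eqA0 Xeq S0pos unfolding t_def by simp
      qed
    qed
    moreover have "\<forall>a\<in>Ob. \<forall>b\<in>Ob. R a b \<longrightarrow> k a = k b"
    proof (intro ballI impI)
      fix a b assume ab: "a \<in> Ob" "b \<in> Ob" "R a b"
      show "k a = k b"
      proof (cases "a \<in> A0")
        case True
        then have "b \<in> A0" using ab trans[of a0 a b] a0 unfolding A0_def by auto
        then show ?thesis using True unfolding k_def by simp
      next
        case False
        then have "b \<notin> A0" using ab trans[of a0 b a] sym[of a b] a0 unfolding A0_def by auto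
        then show ?thesis using False k'c ab unfolding k_def Ob'_def by auto
      qed
    qed
    ultimately show ?thesis by blast
  qed
qed




locale eg = group G for G (structure) +
  fixes p :: nat
  assumes fin: "finite (carrier G)" and prime_p: "Factorial_Ring.prime p"
begin

abbreviation cj :: "'a set \<Rightarrow> 'a \<Rightarrow> 'a set" where "cj H g \<equiv> conj_set G H g"

lemma cancel1 [simp]: "g \<in> carrier G \<Longrightarrow> z \<in> carrier G \<Longrightarrow> g \<otimes> (inv g \<otimes> z) = z"
  by (simp add: m_assoc[symmetric])

lemma cancel2 [simp]: "g \<in> carrier G \<Longrightarrow> z \<in> carrier G \<Longrightarrow> inv g \<otimes> (g \<otimes> z) = z"
  by (simp add: m_assoc[symmetric])

lemma cj_eq: "cj H g = (\<lambda>h. inv g \<otimes> h \<otimes> g) ` H"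
  unfolding conj_set_def by auto

lemma cj_closed: "H \<subseteq> carrier G \<Longrightarrow> g \<in> carrier G \<Longrightarrow> cj H g \<subseteq> carrier G"
  unfolding cj_eq by auto

lemma cj_elem_eq: "g \<in> carrier G \<Longrightarrow> h \<in> carrier G \<Longrightarrow> x \<in> carrier G \<Longrightarrow>
   x = inv g \<otimes> h \<otimes> g \<longleftrightarrow> g \<otimes> x \<otimes> inv g = h"
  by (auto simp add: m_assoc)

lemma cj_mem_iff: "H \<subseteq> carrier G \<Longrightarrow> g \<in> carrier G \<Longrightarrow> x \<in> carrier G \<Longrightarrow>
   x \<in> cj H g \<longleftrightarrow> g \<otimes> x \<otimes> inv g \<in> H"
proof
  assume H: "H \<subseteq> carrier G" and g: "g \<in> carrier G" and x: "x \<in> carrier G" and "x \<in> cj H g"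
  then obtain h where h: "h \<in> H" "x = inv g \<otimes> h \<otimes> g" unfolding cj_eq by blast
  then have "g \<otimes> x \<otimes> inv g = h" using cj_elem_eq[of g h x] H g x by blast
  then show "g \<otimes> x \<otimes> inv g \<in> H" using h by simp
next
  assume H: "H \<subseteq> carrier G" and g: "g \<in> carrier G" and x: "x \<in> carrier G" and h: "g \<otimes> x \<otimes> inv g \<in> H"
  then have "x = inv g \<otimes> (g \<otimes> x \<otimes> inv g) \<otimes> g" using cj_elem_eq[of g "g \<otimes> x \<otimes> inv g" x] by blast
  then show "x \<in> cj H g" using h unfolding cj_eq by blast
qed

lemma cj_cj: "H \<subseteq> carrier G \<Longrightarrow> a \<in> carrier G \<Longrightarrow> b \<in> carrier G \<Longrightarrow>
   cj (cj H a) b = cj H (a \<otimes> b)"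
  unfolding cj_eq image_image
  by (intro image_cong refl) (auto simp: inv_mult_group m_assoc)

lemma cj_one: "H \<subseteq> carrier G \<Longrightarrow> cj H \<one> = H"
  unfolding cj_eq by (auto simp: image_iff) (metis l_one r_one subsetD)+

lemma cj_inv_cancel: "H \<subseteq> carrier G \<Longrightarrow> g \<in> carrier G \<Longrightarrow> cj (cj H g) (inv g) = H"
  by (simp add: cj_cj cj_one)

lemma cj_inv_cancel2: "H \<subseteq> carrier G \<Longrightarrow> g \<in> carrier G \<Longrightarrow> cj (cj H (inv g)) g = H"
  by (simp add: cj_cj cj_one)

lemma inj_cj: "g \<in> carrier G \<Longrightarrow> inj_on (\<lambda>h. inv g \<otimes> h \<otimes> g) (carrier G)"
  by (intro inj_onI) (metis inv_closed m_closed r_cancel l_cancel)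

lemma card_cj: "H \<subseteq> carrier G \<Longrightarrow> g \<in> carrier G \<Longrightarrow> card (cj H g) = card H"
proof -
  assume "H \<subseteq> carrier G" "g \<in> carrier G"
  then have "inj_on (\<lambda>h. inv g \<otimes> h \<otimes> g) H" using inj_on_subset[OF inj_cj] by blast
  then show ?thesis unfolding cj_eq by (rule card_image)
qed

lemma cj_mono: "A \<subseteq> B \<Longrightarrow> cj A g \<subseteq> cj B g"
  unfolding cj_eq by auto

lemma cj_subset_iff: "A \<subseteq> carrier G \<Longrightarrow> B \<subseteq> carrier G \<Longrightarrow> g \<in> carrier G \<Longrightarrow>
   cj A g \<subseteq> B \<longleftrightarrow> A \<subseteq> cj B (inv g)"
  by (metis cj_inv_cancel cj_mono cj_closed inv_closed)

lemma cj_inj: "A \<subseteq> carrier G \<Longrightarrow> B \<subseteq> carrier G \<Longrightarrow> g \<in> carrier G \<Longrightarrow>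
   cj A g = cj B g \<Longrightarrow> A = B"
  by (metis cj_inv_cancel)

lemma cj_hom: "g \<in> carrier G \<Longrightarrow> group_hom G G (\<lambda>h. inv g \<otimes> h \<otimes> g)"
  unfolding group_hom_def group_hom_axioms_def
  by (auto simp: is_group hom_def m_assoc)

lemma subgroup_cj: "subgroup H G \<Longrightarrow> g \<in> carrier G \<Longrightarrow> subgroup (cj H g) G"
  unfolding cj_eq by (rule group_hom.subgroup_img_is_subgroup[OF cj_hom])

lemma cj_one_set: "g \<in> carrier G \<Longrightarrow> cj {\<one>} g = {\<one>}"
  unfolding cj_eq by auto

lemma subgroup_dvd: "subgroup L G \<Longrightarrow> subgroup K G \<Longrightarrow> L \<subseteq> K \<Longrightarrow> card L dvd card K"
proof -
  assume LK: "subgroup L G" "subgroup K G" "L \<subseteq> K"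
  then have "subgroup L (G\<lparr>carrier := K\<rparr>)" by (rule subgroup_incl)
  moreover have "group (G\<lparr>carrier := K\<rparr>)" using LK(2) by (rule subgroup_imp_group)
  ultimately have "card (rcosets\<^bsub>G\<lparr>carrier := K\<rparr>\<^esub> L) * card L = order (G\<lparr>carrier := K\<rparr>)"
    using group.lagrange by blast
  then show ?thesis unfolding order_def by (metis dvd_triv_right partial_object.select_convs(1) partial_object.surjective partial_object.update_convs(1))
qed

definition Ob where "Ob = nonid_p_subgroups G p"

lemma Ob_iff: "H \<in> Ob \<longleftrightarrow> subgroup H G \<and> H \<noteq> {\<one>} \<and> is_p_power p (card H)"
  unfolding Ob_def nonid_p_subgroups_def by simp

lemma Ob_sub: "H \<in> Ob \<Longrightarrow> H \<subseteq> carrier G"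
  by (simp add: Ob_iff subgroup.subset)

lemma finite_sub: "H \<subseteq> carrier G \<Longrightarrow> finite H"
  using fin finite_subset by blast

lemma Ob_finite_elem: "H \<in> Ob \<Longrightarrow> finite H"
  using Ob_sub finite_sub by blast

lemma Ob_card_pos: "H \<in> Ob \<Longrightarrow> card H > 0"
  by (metis Ob_finite_elem Ob_iff card_gt_0_iff subgroup.one_closed empty_iff)

lemma finite_Ob: "finite Ob"
proof -
  have "Ob \<subseteq> Pow (carrier G)" using Ob_sub by auto
  then show ?thesis using fin finite_subset by blast
qed

lemma Ob_cj: "H \<in> Ob \<Longrightarrow> g \<in> carrier G \<Longrightarrow> cj H g \<in> Ob"
proof -
  assume H: "H \<in> Ob" and g: "g \<in> carrier G"
  have "subgroup (cj H g) G" using H g subgroup_cj Ob_iff by blast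
  moreover have "cj H g \<noteq> {\<one>}"
  proof
    assume "cj H g = {\<one>}"
    then have "cj H g = cj {\<one>} g" using cj_one_set g by simp
    then have "H = {\<one>}" using cj_inj[OF Ob_sub[OF H] _ g] by simp
    then show False using H Ob_iff by simp
  qed
  moreover have "card (cj H g) = card H" using card_cj Ob_sub H g by blast
  ultimately show ?thesis using H Ob_iff by simp
qed

lemma p_power_sub: "K \<in> Ob \<Longrightarrow> subgroup L G \<Longrightarrow> L \<subseteq> K \<Longrightarrow> is_p_power p (card L)"
proof -
  assume K: "K \<in> Ob" and L: "subgroup L G" "L \<subseteq> K"
  then have "card L dvd card K" using subgroup_dvd Ob_iff by blast
  moreover obtain k where "card K = p ^ k" using K Ob_iff is_p_power_def by blast
  ultimately have "card L dvd p ^ k" by simp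
  then obtain i where "card L = p ^ i" using divides_primepow_nat[OF prime_p] by blast
  then show ?thesis unfolding is_p_power_def by blast
qed

lemma sub_Ob: "K \<in> Ob \<Longrightarrow> subgroup L G \<Longrightarrow> L \<subseteq> K \<Longrightarrow> L \<noteq> {\<one>} \<Longrightarrow> L \<in> Ob"
  using p_power_sub Ob_iff by blast

lemma cj_eq_if_sub: "H \<in> Ob \<Longrightarrow> K \<in> Ob \<Longrightarrow> g \<in> carrier G \<Longrightarrow> cj H g \<subseteq> K \<Longrightarrow> card H = card K \<Longrightarrow> cj H g = K"
  by (metis Ob_finite_elem Ob_sub card_cj card_subset_eq)

end



context eg begin

abbreviation NN :: "'a set \<Rightarrow> 'a set \<Rightarrow> 'a set" where "NN H K \<equiv> transporter G H K"
abbreviation CC :: "'a set \<Rightarrow> 'a set" where "CC H \<equiv> centralizer_of G H"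

lemma NN_sub: "NN H K \<subseteq> carrier G"
  unfolding transporter_def by auto

lemma NN_finite: "finite (NN H K)"
  using NN_sub finite_sub by blast

lemma one_NN: "H \<subseteq> carrier G \<Longrightarrow> \<one> \<in> NN H H"
  unfolding transporter_def using cj_one by auto

lemma sub_cj_iff: "A \<subseteq> carrier G \<Longrightarrow> K \<subseteq> carrier G \<Longrightarrow> x \<in> carrier G \<Longrightarrow>
   A \<subseteq> cj K x \<longleftrightarrow> cj A (inv x) \<subseteq> K"
  using cj_subset_iff[of A K "inv x"] by simp

lemma NN_cj: assumes H: "H \<subseteq> carrier G" and K: "K \<subseteq> carrier G" and x: "x \<in> carrier G"
  shows "NN (cj H x) (cj K x) = cj (NN H K) x"
proof (rule Set.set_eqI)
  fix g
  show "g \<in> NN (cj H x) (cj K x) \<longleftrightarrow> g \<in> cj (NN H K) x"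
  proof (cases "g \<in> carrier G")
    case False
    then show ?thesis using cj_closed[OF NN_sub x] unfolding transporter_def by auto
  next
    case g: True
    have "g \<in> NN (cj H x) (cj K x) \<longleftrightarrow> cj H (x \<otimes> g) \<subseteq> cj K x"
      unfolding transporter_def using g H x by (simp add: cj_cj)
    also have "\<dots> \<longleftrightarrow> cj H (x \<otimes> g \<otimes> inv x) \<subseteq> K"
      using sub_cj_iff[of "cj H (x \<otimes> g)" K x] H K x g by (simp add: cj_cj cj_closed)
    also have "\<dots> \<longleftrightarrow> x \<otimes> g \<otimes> inv x \<in> NN H K"
      unfolding transporter_def using x g by simp
    also have "\<dots> \<longleftrightarrow> g \<in> cj (NN H K) x"
      using cj_mem_iff[OF NN_sub x g] by simp
    finally show ?thesis .
  qed
qed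

lemma card_NN_cj: "H \<subseteq> carrier G \<Longrightarrow> K \<subseteq> carrier G \<Longrightarrow> x \<in> carrier G \<Longrightarrow>
   card (NN (cj H x) (cj K x)) = card (NN H K)"
  by (simp add: NN_cj card_cj NN_sub)

lemma CC_sub: "CC H \<subseteq> carrier G"
  unfolding centralizer_of_def by auto

lemma subgroup_CC: assumes H: "H \<subseteq> carrier G" shows "subgroup (CC H) G"
proof (rule subgroupI)
  show "CC H \<subseteq> carrier G" by (rule CC_sub)
  have "\<one> \<in> CC H" unfolding centralizer_of_def using H by auto
  then show "CC H \<noteq> {}" by blast
  fix a assume a: "a \<in> CC H"
  show "inv a \<in> CC H" unfolding centralizer_of_def
  proof (intro CollectI conjI ballI)
    show ac: "inv a \<in> carrier G" using a CC_sub by auto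
    fix h assume h: "h \<in> H"
    have aa: "a \<in> carrier G" and ah: "a \<otimes> h = h \<otimes> a" using a h unfolding centralizer_of_def by auto
    have hc: "h \<in> carrier G" using h H by auto
    have "inv a \<otimes> h = inv a \<otimes> (h \<otimes> a) \<otimes> inv a" using aa hc by (simp add: m_assoc)
    also have "\<dots> = inv a \<otimes> (a \<otimes> h) \<otimes> inv a" using ah by simp
    also have "\<dots> = h \<otimes> inv a" using aa hc by (simp add: m_assoc[symmetric])
    finally show "inv a \<otimes> h = h \<otimes> inv a" .
  qed
  fix b assume b: "b \<in> CC H"
  show "a \<otimes> b \<in> CC H" unfolding centralizer_of_def
  proof (intro CollectI conjI ballI)
    have aa: "a \<in> carrier G" and bb: "b \<in> carrier G" using a b CC_sub by auto
    then show "a \<otimes> b \<in> carrier G" by simp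
    fix h assume h: "h \<in> H"
    have ah: "a \<otimes> h = h \<otimes> a" and bh: "b \<otimes> h = h \<otimes> b" using a b h unfolding centralizer_of_def by auto
    have hc: "h \<in> carrier G" using h H by auto
    have "a \<otimes> b \<otimes> h = a \<otimes> (h \<otimes> b)" using aa bb hc bh by (simp add: m_assoc)
    also have "\<dots> = (a \<otimes> h) \<otimes> b" using aa bb hc by (simp add: m_assoc)
    also have "\<dots> = h \<otimes> (a \<otimes> b)" using aa bb hc ah by (simp add: m_assoc)
    finally show "a \<otimes> b \<otimes> h = h \<otimes> (a \<otimes> b)" .
  qed
qed

lemma comm_cj: "a \<in> carrier G \<Longrightarrow> b \<in> carrier G \<Longrightarrow> x \<in> carrier G \<Longrightarrow>
   a \<otimes> b = b \<otimes> a \<longleftrightarrow>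
   (x \<otimes> a \<otimes> inv x) \<otimes> (x \<otimes> b \<otimes> inv x) = (x \<otimes> b \<otimes> inv x) \<otimes> (x \<otimes> a \<otimes> inv x)"
proof -
  assume a: "a \<in> carrier G" and b: "b \<in> carrier G" and x: "x \<in> carrier G"
  have e1: "(x \<otimes> a \<otimes> inv x) \<otimes> (x \<otimes> b \<otimes> inv x) = x \<otimes> (a \<otimes> b) \<otimes> inv x"
    using a b x by (simp add: m_assoc)
  have e2: "(x \<otimes> b \<otimes> inv x) \<otimes> (x \<otimes> a \<otimes> inv x) = x \<otimes> (b \<otimes> a) \<otimes> inv x"
    using a b x by (simp add: m_assoc)
  have "x \<otimes> (a \<otimes> b) \<otimes> inv x = x \<otimes> (b \<otimes> a) \<otimes> inv x \<longleftrightarrow> a \<otimes> b = b \<otimes> a"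
    using a b x by (metis inv_closed l_cancel m_closed r_cancel)
  then show ?thesis using e1 e2 by simp
qed

lemma CC_cj: assumes H: "H \<subseteq> carrier G" and x: "x \<in> carrier G"
  shows "CC (cj H x) = cj (CC H) x"
proof (rule Set.set_eqI)
  fix g
  show "g \<in> CC (cj H x) \<longleftrightarrow> g \<in> cj (CC H) x"
  proof (cases "g \<in> carrier G")
    case False
    then show ?thesis using cj_closed[OF CC_sub x] unfolding centralizer_of_def by auto
  next
    case g: True
    have "g \<in> CC (cj H x) \<longleftrightarrow> (\<forall>h\<in>H. g \<otimes> (inv x \<otimes> h \<otimes> x) = (inv x \<otimes> h \<otimes> x) \<otimes> g)"
      unfolding centralizer_of_def cj_eq using g by auto
    also have "\<dots> \<longleftrightarrow> (\<forall>h\<in>H. (x \<otimes> g \<otimes> inv x) \<otimes> h = h \<otimes> (x \<otimes> g \<otimes> inv x))"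
    proof (intro ball_cong refl)
      fix h assume "h \<in> H"
      then have h: "h \<in> carrier G" using H by auto
      have i1: "x \<otimes> (inv x \<otimes> h \<otimes> x) \<otimes> inv x = h" using h x by (simp add: m_assoc)
      show "g \<otimes> (inv x \<otimes> h \<otimes> x) = (inv x \<otimes> h \<otimes> x) \<otimes> g \<longleftrightarrow> (x \<otimes> g \<otimes> inv x) \<otimes> h = h \<otimes> (x \<otimes> g \<otimes> inv x)"
        using comm_cj[of g "inv x \<otimes> h \<otimes> x" x] g h x i1 by simp
    qed
    also have "\<dots> \<longleftrightarrow> x \<otimes> g \<otimes> inv x \<in> CC H"
      unfolding centralizer_of_def using g x by auto
    also have "\<dots> \<longleftrightarrow> g \<in> cj (CC H) x"
      using cj_mem_iff[OF CC_sub x g] by simp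
    finally show ?thesis .
  qed
qed

lemma card_CC_cj: "H \<subseteq> carrier G \<Longrightarrow> x \<in> carrier G \<Longrightarrow> card (CC (cj H x)) = card (CC H)"
  by (simp add: CC_cj card_cj CC_sub)

lemma cj_by_CC: "H \<subseteq> carrier G \<Longrightarrow> c \<in> CC H \<Longrightarrow> cj H c = H"
proof -
  assume H: "H \<subseteq> carrier G" and c: "c \<in> CC H"
  have cc: "c \<in> carrier G" using c CC_sub by auto
  have "inv c \<otimes> h \<otimes> c = h" if "h \<in> H" for h
  proof -
    have hc: "h \<in> carrier G" using that H by auto
    have "c \<otimes> h = h \<otimes> c" using c that unfolding centralizer_of_def by auto
    then have "inv c \<otimes> h \<otimes> c = inv c \<otimes> (c \<otimes> h)" using cc hc by (simp add: m_assoc)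
    then show ?thesis using cc hc by simp
  qed
  then show ?thesis unfolding cj_eq by (simp add: image_cong[OF refl, of H _ id, simplified])
qed

lemma CC_mult_NN: "H \<subseteq> carrier G \<Longrightarrow> c \<in> CC H \<Longrightarrow> g \<in> NN H K \<Longrightarrow> c \<otimes> g \<in> NN H K"
proof -
  assume H: "H \<subseteq> carrier G" and c: "c \<in> CC H" and g: "g \<in> NN H K"
  have cc: "c \<in> carrier G" using c CC_sub by auto
  have gc: "g \<in> carrier G" using g NN_sub by auto
  have "cj H (c \<otimes> g) = cj (cj H c) g" using cj_cj[OF H cc gc] by simp
  also have "\<dots> = cj H g" using cj_by_CC[OF H c] by simp
  finally show ?thesis using g cc gc unfolding transporter_def by auto
qed

end



context eg begin

definition OpF :: "'a set \<Rightarrow> 'a set set" where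
  "OpF Y = {N. subgroup N G \<and> N \<subseteq> Y \<and>
       (\<forall>x\<in>Y. \<forall>n\<in>N. x \<otimes> n \<otimes> inv x \<in> N) \<and>
       is_p_power p (card Y div card N) \<and> card N dvd card Y}"

lemma Op_eq: "Op G p Y = \<Inter> (OpF Y)"
  unfolding Op_def OpF_def by simp

lemma subgroup_card_pos: "subgroup Y G \<Longrightarrow> card Y > 0"
  by (metis card_gt_0_iff empty_iff finite_sub subgroup.one_closed subgroup.subset)

lemma Y_in_OpF: "subgroup Y G \<Longrightarrow> Y \<in> OpF Y"
proof -
  assume Y: "subgroup Y G"
  have "card Y div card Y = p ^ 0" using subgroup_card_pos[OF Y] by simp
  then have "is_p_power p (card Y div card Y)" unfolding is_p_power_def by blast
  then show ?thesis unfolding OpF_def using Y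
    by (auto simp: subgroup.m_closed subgroup.m_inv_closed)
qed

lemma subgroup_Op: "subgroup Y G \<Longrightarrow> subgroup (Op G p Y) G"
proof -
  assume Y: "subgroup Y G"
  show ?thesis unfolding Op_eq
    by (rule subgroups_Inter) (use Y_in_OpF[OF Y] in \<open>auto simp: OpF_def\<close>)
qed

lemma Op_sub: "subgroup Y G \<Longrightarrow> Op G p Y \<subseteq> Y"
  unfolding Op_eq using Y_in_OpF by blast

lemma OpF_cj: assumes Y: "subgroup Y G" and N: "N \<in> OpF Y" and x: "x \<in> carrier G"
  shows "cj N x \<in> OpF (cj Y x)"
proof -
  define f where "f h = inv x \<otimes> h \<otimes> x" for h
  have hom: "group_hom G G f" unfolding f_def by (rule cj_hom[OF x])
  have Ysub: "Y \<subseteq> carrier G" using Y subgroup.subset by blast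
  have Nsg: "subgroup N G" and NY: "N \<subseteq> Y" and nor: "\<forall>y\<in>Y. \<forall>n\<in>N. y \<otimes> n \<otimes> inv y \<in> N"
    and pp: "is_p_power p (card Y div card N)" and dv: "card N dvd card Y"
    using N unfolding OpF_def by auto
  have Nsub: "N \<subseteq> carrier G" using NY Ysub by auto
  have cY: "card (cj Y x) = card Y" and cN: "card (cj N x) = card N"
    using card_cj Ysub Nsub x by auto
  have "\<forall>y\<in>cj Y x. \<forall>n\<in>cj N x. y \<otimes> n \<otimes> inv y \<in> cj N x"
  proof (intro ballI)
    fix y n assume "y \<in> cj Y x" "n \<in> cj N x"
    then obtain y0 n0 where y0: "y0 \<in> Y" "y = f y0" and n0: "n0 \<in> N" "n = f n0"
      unfolding cj_eq f_def by auto
    have y0c: "y0 \<in> carrier G" and n0c: "n0 \<in> carrier G" using y0 n0 Ysub Nsub by auto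
    have "y \<otimes> n \<otimes> inv y = f (y0 \<otimes> n0 \<otimes> inv y0)"
      using y0 n0 y0c n0c group_hom.hom_mult[OF hom] group_hom.hom_inv[OF hom] by simp
    moreover have "y0 \<otimes> n0 \<otimes> inv y0 \<in> N" using nor y0 n0 by blast
    ultimately show "y \<otimes> n \<otimes> inv y \<in> cj N x" unfolding cj_eq f_def by blast
  qed
  moreover have "subgroup (cj N x) G" using subgroup_cj[OF Nsg x] .
  moreover have "cj N x \<subseteq> cj Y x" using cj_mono[OF NY] .
  ultimately show ?thesis unfolding OpF_def using cY cN pp dv by simp
qed

lemma OpF_cj_eq: assumes Y: "subgroup Y G" and x: "x \<in> carrier G"
  shows "OpF (cj Y x) = (\<lambda>N. cj N x) ` OpF Y"
proof
  show "(\<lambda>N. cj N x) ` OpF Y \<subseteq> OpF (cj Y x)" using OpF_cj[OF Y _ x] by blast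
  show "OpF (cj Y x) \<subseteq> (\<lambda>N. cj N x) ` OpF Y"
  proof
    fix M assume M: "M \<in> OpF (cj Y x)"
    have Ysub: "Y \<subseteq> carrier G" using Y subgroup.subset by blast
    have Y': "subgroup (cj Y x) G" using subgroup_cj[OF Y x] .
    have "cj M (inv x) \<in> OpF (cj (cj Y x) (inv x))" using OpF_cj[OF Y' M] x by simp
    then have 1: "cj M (inv x) \<in> OpF Y" using cj_inv_cancel[OF Ysub x] by simp
    have "M \<subseteq> carrier G" using M unfolding OpF_def using subgroup.subset by blast
    then have "M = cj (cj M (inv x)) x" using cj_inv_cancel2 x by simp
    then show "M \<in> (\<lambda>N. cj N x) ` OpF Y" using 1 by blast
  qed
qed

lemma Op_cj: assumes Y: "subgroup Y G" and x: "x \<in> carrier G"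
  shows "Op G p (cj Y x) = cj (Op G p Y) x"
proof -
  define f where "f h = inv x \<otimes> h \<otimes> x" for h
  have inj: "inj_on f (carrier G)" unfolding f_def using inj_cj[OF x] .
  have sub: "\<forall>N\<in>OpF Y. N \<subseteq> carrier G" unfolding OpF_def using subgroup.subset by blast
  have "f ` (\<Inter> ((\<lambda>N. N) ` OpF Y)) = (\<Inter>N\<in>OpF Y. f ` N)"
    by (rule image_INT[OF inj]) (use sub Y_in_OpF[OF Y] in auto)
  then have "cj (Op G p Y) x = (\<Inter>N\<in>OpF Y. cj N x)"
    unfolding Op_eq cj_eq f_def by simp
  also have "\<dots> = \<Inter> (OpF (cj Y x))" using OpF_cj_eq[OF Y x] by simp
  finally show ?thesis unfolding Op_eq by simp
qed

lemma card_Op_cj: "subgroup Y G \<Longrightarrow> x \<in> carrier G \<Longrightarrow> card (Op G p (cj Y x)) = card (Op G p Y)"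
  by (simp add: Op_cj card_cj subgroup.subset subgroup_Op)

lemma card_rcos: "XG \<subseteq> carrier G \<Longrightarrow> t \<in> carrier G \<Longrightarrow> card (XG #> t) = card XG"
proof -
  assume XG: "XG \<subseteq> carrier G" and t: "t \<in> carrier G"
  have "XG #> t = (\<lambda>h. h \<otimes> t) ` XG" unfolding r_coset_def by auto
  moreover have "inj_on (\<lambda>h. h \<otimes> t) XG" using XG t by (intro inj_onI) (auto dest: r_cancel)
  ultimately show ?thesis by (simp add: card_image)
qed

lemma card_lcos: "XG \<subseteq> carrier G \<Longrightarrow> t \<in> carrier G \<Longrightarrow> card (t <# XG) = card XG"
proof -
  assume XG: "XG \<subseteq> carrier G" and t: "t \<in> carrier G"
  have "t <# XG = (\<lambda>h. t \<otimes> h) ` XG" unfolding l_coset_def by auto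
  moreover have "inj_on (\<lambda>h. t \<otimes> h) XG" using XG t by (intro inj_onI) (auto dest: l_cancel)
  ultimately show ?thesis by (simp add: card_image)
qed

lemma card_rcos_img:
  assumes XG: "subgroup XG G" and T: "T \<subseteq> carrier G" and cl: "\<forall>x\<in>XG. \<forall>t\<in>T. x \<otimes> t \<in> T"
  shows "card ((\<lambda>g. XG #> g) ` T) * card XG = card T"
proof -
  let ?C = "(\<lambda>g. XG #> g) ` T"
  have Xs: "XG \<subseteq> carrier G" using XG subgroup.subset by blast
  have U: "\<Union> ?C = T"
  proof
    show "\<Union> ?C \<subseteq> T" using cl unfolding r_coset_def by auto
    show "T \<subseteq> \<Union> ?C"
    proof
      fix t assume t: "t \<in> T"
      then have "t \<in> XG #> t" using T XG unfolding r_coset_def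
        by (auto intro!: bexI[of _ "\<one>"] simp: subgroup.one_closed)
      then show "t \<in> \<Union> ?C" using t by blast
    qed
  qed
  have "card XG * card ?C = card (\<Union> ?C)"
  proof (rule card_partition)
    show "finite ?C" using T finite_sub by blast
    show "finite (\<Union> ?C)" using U T finite_sub by simp
    show "\<And>c. c \<in> ?C \<Longrightarrow> card c = card XG" using card_rcos Xs T by auto
    show "\<And>c1 c2. c1 \<in> ?C \<Longrightarrow> c2 \<in> ?C \<Longrightarrow> c1 \<noteq> c2 \<Longrightarrow> c1 \<inter> c2 = {}"
    proof -
      fix c1 c2 assume "c1 \<in> ?C" "c2 \<in> ?C" "c1 \<noteq> c2"
      then obtain a b where ab: "a \<in> T" "b \<in> T" "c1 = XG #> a" "c2 = XG #> b" by auto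
      show "c1 \<inter> c2 = {}"
      proof (rule ccontr)
        assume "c1 \<inter> c2 \<noteq> {}"
        then obtain z where "z \<in> XG #> a" "z \<in> XG #> b" using ab by auto
        then have "XG #> a = XG #> z" "XG #> b = XG #> z"
          using repr_independence XG ab T by auto
        then show False using ab \<open>c1 \<noteq> c2\<close> by simp
      qed
    qed
  qed
  then show ?thesis using U by (simp add: mult.commute)
qed

lemma card_lcos_img:
  assumes K: "subgroup K G" and T: "T \<subseteq> carrier G" and cl: "\<forall>t\<in>T. \<forall>k\<in>K. t \<otimes> k \<in> T"
  shows "card ((\<lambda>g. g <# K) ` T) * card K = card T"
proof -
  let ?C = "(\<lambda>g. g <# K) ` T"
  have Ks: "K \<subseteq> carrier G" using K subgroup.subset by blast
  have U: "\<Union> ?C = T"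
  proof
    show "\<Union> ?C \<subseteq> T" using cl unfolding l_coset_def by auto
    show "T \<subseteq> \<Union> ?C"
    proof
      fix t assume t: "t \<in> T"
      then have "t \<in> t <# K" using T K unfolding l_coset_def
        by (auto intro!: bexI[of _ "\<one>"] simp: subgroup.one_closed)
      then show "t \<in> \<Union> ?C" using t by blast
    qed
  qed
  have "card K * card ?C = card (\<Union> ?C)"
  proof (rule card_partition)
    show "finite ?C" using T finite_sub by blast
    show "finite (\<Union> ?C)" using U T finite_sub by simp
    show "\<And>c. c \<in> ?C \<Longrightarrow> card c = card K" using card_lcos Ks T by auto
    show "\<And>c1 c2. c1 \<in> ?C \<Longrightarrow> c2 \<in> ?C \<Longrightarrow> c1 \<noteq> c2 \<Longrightarrow> c1 \<inter> c2 = {}"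
    proof -
      fix c1 c2 assume "c1 \<in> ?C" "c2 \<in> ?C" "c1 \<noteq> c2"
      then obtain a b where ab: "a \<in> T" "b \<in> T" "c1 = a <# K" "c2 = b <# K" by auto
      show "c1 \<inter> c2 = {}"
      proof (rule ccontr)
        assume "c1 \<inter> c2 \<noteq> {}"
        then obtain z where "z \<in> a <# K" "z \<in> b <# K" using ab by auto
        then have "a <# K = z <# K" "b <# K = z <# K"
          using l_repr_independence K ab T by auto
        then show False using ab \<open>c1 \<noteq> c2\<close> by simp
      qed
    qed
  qed
  then show ?thesis using U by (simp add: mult.commute)
qed

lemma card_homT: "card (homT G H K) = card (NN H K)"
  unfolding homT_def by simp

lemma card_homF: assumes H: "H \<subseteq> carrier G"
  shows "card (homF G H K) * card (CC H) = card (NN H K)"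
  unfolding homF_def
  by (rule card_rcos_img[OF subgroup_CC[OF H] NN_sub]) (use CC_mult_NN[OF H] in blast)

lemma card_homL: assumes H: "H \<subseteq> carrier G"
  shows "card (homL G p H K) * card (Op G p (CC H)) = card (NN H K)"
  unfolding homL_def
proof (rule card_rcos_img[OF subgroup_Op[OF subgroup_CC[OF H]] NN_sub])
  show "\<forall>x\<in>Op G p (CC H). \<forall>t\<in>NN H K. x \<otimes> t \<in> NN H K"
    using CC_mult_NN[OF H] Op_sub[OF subgroup_CC[OF H]] by blast
qed

lemma cj_in_sub: "subgroup K G \<Longrightarrow> k \<in> K \<Longrightarrow> cj K k \<subseteq> K"
  unfolding cj_eq by (auto simp: subgroup.m_closed subgroup.m_inv_closed)

lemma NN_mult_right: assumes K: "subgroup K G" and t: "t \<in> NN H K" and k: "k \<in> K"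
  and H: "H \<subseteq> carrier G"
  shows "t \<otimes> k \<in> NN H K"
proof -
  have tc: "t \<in> carrier G" using t NN_sub by auto
  have kc: "k \<in> carrier G" using k K subgroup.subset by blast
  have "cj H (t \<otimes> k) = cj (cj H t) k" using cj_cj[OF H tc kc] by simp
  also have "\<dots> \<subseteq> cj K k" using t unfolding transporter_def by (intro cj_mono) auto
  also have "\<dots> \<subseteq> K" using cj_in_sub[OF K k] .
  finally show ?thesis unfolding transporter_def using tc kc by simp
qed

lemma card_homO: assumes K: "subgroup K G" and H: "H \<subseteq> carrier G"
  shows "card (homO G H K) * card K = card (NN H K)"
  unfolding homO_def
  by (rule card_lcos_img[OF K NN_sub]) (use NN_mult_right[OF K _ _ H] in blast)

end



context eg begin

abbreviation mu :: "'a set \<Rightarrow> int" where "mu K \<equiv> mobius1 G K"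

lemma subgroup_one: "subgroup {\<one>} G"
  by (rule subgroupI) auto

lemma one_sub: "subgroup L G \<Longrightarrow> {\<one>} \<subseteq> L"
  using subgroup.one_closed by blast

lemma mu_one: "mu {\<one>} = 1"
  unfolding mobius1_def using fin subgroup_one by (subst mobius.simps) simp

lemma mu_rec: "subgroup K G \<Longrightarrow> K \<noteq> {\<one>} \<Longrightarrow>
   mu K = - (\<Sum>L\<in>{L. subgroup L G \<and> {\<one>} \<subseteq> L \<and> L \<subset> K}. mu L)"
  unfolding mobius1_def using fin subgroup_one one_sub by (subst mobius.simps) simp

lemma finite_subgroups: "finite {L. subgroup L G \<and> P L}"
proof -
  have "{L. subgroup L G \<and> P L} \<subseteq> Pow (carrier G)" using subgroup.subset by blast
  then show ?thesis using fin finite_subset by blast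
qed

lemma mu_sum: assumes K: "subgroup K G" and K1: "K \<noteq> {\<one>}"
  shows "(\<Sum>L\<in>{L. subgroup L G \<and> L \<subseteq> K}. mu L) = 0"
proof -
  have e: "{L. subgroup L G \<and> L \<subseteq> K} = insert K {L. subgroup L G \<and> {\<one>} \<subseteq> L \<and> L \<subset> K}"
    using K one_sub by auto
  have "(\<Sum>L\<in>{L. subgroup L G \<and> L \<subseteq> K}. mu L) = mu K + (\<Sum>L\<in>{L. subgroup L G \<and> {\<one>} \<subseteq> L \<and> L \<subset> K}. mu L)"
    unfolding e by (subst sum.insert) (auto intro: finite_subgroups)
  then show ?thesis using mu_rec[OF K K1] by simp
qed

lemma mu_sum_Ob: assumes K: "K \<in> Ob"
  shows "(\<Sum>L\<in>{L\<in>Ob. L \<subseteq> K}. mu L) = -1"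
proof -
  have Ks: "subgroup K G" "K \<noteq> {\<one>}" using K Ob_iff by auto
  have e: "{L. subgroup L G \<and> L \<subseteq> K} = insert {\<one>} {L\<in>Ob. L \<subseteq> K}"
    using Ks one_sub subgroup_one sub_Ob[OF K] Ob_iff by auto
  have fin1: "finite {L\<in>Ob. L \<subseteq> K}" using finite_Ob by auto
  have "{\<one>} \<notin> {L\<in>Ob. L \<subseteq> K}" using Ob_iff by auto
  then have "0 = mu {\<one>} + (\<Sum>L\<in>{L\<in>Ob. L \<subseteq> K}. mu L)"
    using mu_sum[OF Ks] unfolding e using fin1 by simp
  then show ?thesis using mu_one by simp
qed

lemma cj_psubset: "A \<subseteq> carrier G \<Longrightarrow> B \<subseteq> carrier G \<Longrightarrow> x \<in> carrier G \<Longrightarrow> cj A x \<subset> cj B x \<longleftrightarrow> A \<subset> B"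
  by (metis cj_inj cj_mono cj_inv_cancel psubset_eq)

lemma mu_cj: "subgroup K G \<Longrightarrow> x \<in> carrier G \<Longrightarrow> mu (cj K x) = mu K"
proof (induction "card K" arbitrary: K rule: less_induct)
  case less
  have Ks: "K \<subseteq> carrier G" using less.prems subgroup.subset by blast
  have sK: "subgroup (cj K x) G" using subgroup_cj less.prems by blast
  show ?case
  proof (cases "K = {\<one>}")
    case True
    then show ?thesis using cj_one_set less.prems by simp
  next
    case False
    then have F': "cj K x \<noteq> {\<one>}"
      using cj_inj[OF Ks _ less.prems(2), of "{\<one>}"] cj_one_set[OF less.prems(2)] by auto
    have "(\<Sum>L\<in>{L. subgroup L G \<and> {\<one>} \<subseteq> L \<and> L \<subset> K}. mu L)
        = (\<Sum>L\<in>{L. subgroup L G \<and> {\<one>} \<subseteq> L \<and> L \<subset> cj K x}. mu L)"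
    proof (rule sum.reindex_bij_witness[where j = "\<lambda>L. cj L x" and i = "\<lambda>L. cj L (inv x)"])
      fix L assume L: "L \<in> {L. subgroup L G \<and> {\<one>} \<subseteq> L \<and> L \<subset> K}"
      then have Lsg: "subgroup L G" and LK: "L \<subset> K" by auto
      have Ls: "L \<subseteq> carrier G" using Lsg subgroup.subset by blast
      show "cj (cj L x) (inv x) = L" using cj_inv_cancel[OF Ls less.prems(2)] .
      show "cj L x \<in> {L. subgroup L G \<and> {\<one>} \<subseteq> L \<and> L \<subset> cj K x}"
        using subgroup_cj[OF Lsg less.prems(2)] one_sub cj_psubset[OF Ls Ks less.prems(2)] LK by auto
      have "card L < card K" using LK finite_sub[OF Ks] psubset_card_mono by blast
      then show "mu (cj L x) = mu L" using less.hyps Lsg less.prems(2) by blast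
    next
      fix L assume L: "L \<in> {L. subgroup L G \<and> {\<one>} \<subseteq> L \<and> L \<subset> cj K x}"
      then have Lsg: "subgroup L G" and LK: "L \<subset> cj K x" by auto
      have Ls: "L \<subseteq> carrier G" using Lsg subgroup.subset by blast
      have ix: "inv x \<in> carrier G" using less.prems(2) by simp
      show "cj (cj L (inv x)) x = L" using cj_inv_cancel2[OF Ls less.prems(2)] .
      have "cj L (inv x) \<subset> cj (cj K x) (inv x)"
        using cj_psubset[OF Ls cj_closed[OF Ks less.prems(2)] ix] LK by simp
      then have "cj L (inv x) \<subset> K" using cj_inv_cancel[OF Ks less.prems(2)] by simp
      then show "cj L (inv x) \<in> {L. subgroup L G \<and> {\<one>} \<subseteq> L \<and> L \<subset> K}"
        using subgroup_cj[OF Lsg ix] one_sub by auto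
    qed
    then show ?thesis using mu_rec[OF less.prems(1) False] mu_rec[OF sK F'] by simp
  qed
qed

lemma card_NN_sum: "card (NN H K) = (\<Sum>g\<in>carrier G. if cj H g \<subseteq> K then 1 else 0)"
  unfolding transporter_def using fin by (simp add: sum.If_cases Int_def)

lemma NN_reindex:
  fixes f :: "'a set \<Rightarrow> rat"
  assumes K: "K \<in> Ob" and inv: "\<And>H x. H \<in> Ob \<Longrightarrow> x \<in> carrier G \<Longrightarrow> f (cj H x) = f H"
  shows "(\<Sum>H\<in>Ob. f H * of_nat (card (NN H K))) = of_nat (card (carrier G)) * (\<Sum>L\<in>{L\<in>Ob. L \<subseteq> K}. f L)"
proof -
  have "(\<Sum>H\<in>Ob. f H * of_nat (card (NN H K))) = (\<Sum>H\<in>Ob. \<Sum>g\<in>carrier G. if cj H g \<subseteq> K then f H else 0)"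
    unfolding card_NN_sum by (simp add: of_nat_sum sum_distrib_left if_distrib cong: if_cong)
  also have "\<dots> = (\<Sum>g\<in>carrier G. \<Sum>H\<in>Ob. if cj H g \<subseteq> K then f H else 0)"
    by (rule sum.swap)
  also have "\<dots> = (\<Sum>g\<in>carrier G. \<Sum>L\<in>{L\<in>Ob. L \<subseteq> K}. f L)"
  proof (rule sum.cong[OF refl])
    fix g assume g: "g \<in> carrier G"
    have ig: "inv g \<in> carrier G" using g by simp
    have "(\<Sum>H\<in>Ob. if cj H g \<subseteq> K then f H else 0) = (\<Sum>H\<in>{H\<in>Ob. cj H g \<subseteq> K}. f H)"
      using finite_Ob by (simp add: sum.inter_filter)
    also have "\<dots> = (\<Sum>L\<in>{L\<in>Ob. L \<subseteq> K}. f L)"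
    proof (rule sum.reindex_bij_witness[where j = "\<lambda>H. cj H g" and i = "\<lambda>L. cj L (inv g)"])
      fix H assume H: "H \<in> {H\<in>Ob. cj H g \<subseteq> K}"
      show "cj (cj H g) (inv g) = H" using cj_inv_cancel[OF Ob_sub g] H by simp
      show "cj H g \<in> {L\<in>Ob. L \<subseteq> K}" using H Ob_cj g by simp
      show "f (cj H g) = f H" using inv H g by simp
    next
      fix L assume L: "L \<in> {L\<in>Ob. L \<subseteq> K}"
      show "cj (cj L (inv g)) g = L" using cj_inv_cancel2[OF Ob_sub g] L by simp
      show "cj L (inv g) \<in> {H\<in>Ob. cj H g \<subseteq> K}" using L Ob_cj[OF _ ig] cj_inv_cancel2[OF Ob_sub g] by simp
    qed
    finally show "(\<Sum>H\<in>Ob. if cj H g \<subseteq> K then f H else 0) = (\<Sum>L\<in>{L\<in>Ob. L \<subseteq> K}. f L)" .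
  qed
  also have "\<dots> = of_nat (card (carrier G)) * (\<Sum>L\<in>{L\<in>Ob. L \<subseteq> K}. f L)" by simp
  finally show ?thesis .
qed

lemma mu_NN_sum: assumes K: "K \<in> Ob"
  shows "(\<Sum>H\<in>Ob. - of_int (mu H) * of_nat (card (NN H K))) = (of_nat (card (carrier G)) :: rat)"
proof -
  have "(\<Sum>H\<in>Ob. - of_int (mu H) * of_nat (card (NN H K))) = of_nat (card (carrier G)) * (\<Sum>L\<in>{L\<in>Ob. L \<subseteq> K}. - (of_int (mu L) :: rat))"
    by (rule NN_reindex[OF K]) (simp add: mu_cj Ob_iff)
  also have "(\<Sum>L\<in>{L\<in>Ob. L \<subseteq> K}. - (of_int (mu L) :: rat)) = 1"
    using mu_sum_Ob[OF K] by (simp add: sum_negf flip: of_int_sum)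
  finally show ?thesis by simp
qed

lemma card_G_pos: "card (carrier G) > 0"
  using fin one_closed by (auto simp add: card_gt_0_iff)

lemma coweighting_from:
  fixes c :: "'a set \<Rightarrow> rat"
  assumes eq: "\<And>H K. H \<in> Ob \<Longrightarrow> K \<in> Ob \<Longrightarrow> of_nat (z H K) * c H = of_nat (card (NN H K))"
  shows "is_coweighting Ob z (\<lambda>H. - of_int (mu H) * c H / of_nat (card (carrier G)))"
  unfolding is_coweighting_def
proof
  fix K assume K: "K \<in> Ob"
  have "(\<Sum>H\<in>Ob. - of_int (mu H) * c H / of_nat (card (carrier G)) * of_nat (z H K))
      = (\<Sum>H\<in>Ob. - of_int (mu H) * of_nat (card (NN H K))) / of_nat (card (carrier G))"
    by (simp add: sum_divide_distrib eq[OF _ K, symmetric] mult.commute mult.left_commute)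
  also have "\<dots> = 1" using mu_NN_sum[OF K] card_G_pos by simp
  finally show "(\<Sum>H\<in>Ob. - of_int (mu H) * c H / of_nat (card (carrier G)) * of_nat (z H K)) = 1" .
qed

end



context eg begin

definition DC :: "'a set \<Rightarrow> 'a set \<Rightarrow> 'a \<Rightarrow> 'a set" where
  "DC H K g = {c \<otimes> g \<otimes> k | c k. c \<in> CC H \<and> k \<in> K}"

definition ZZ :: "'a set \<Rightarrow> 'a set \<Rightarrow> 'a \<Rightarrow> 'a set" where
  "ZZ H K g = {k \<in> K. k \<in> CC (cj H g)}"

definition CK :: "'a set \<Rightarrow> 'a \<Rightarrow> 'a set" where
  "CK K k = {y \<in> K. y \<otimes> k = k \<otimes> y}"

lemma homFt_eq: "homFt G H K = DC H K ` NN H K"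
  unfolding homFt_def DC_def set_mult_def r_coset_def by auto

lemma cj_Int: "A \<subseteq> carrier G \<Longrightarrow> B \<subseteq> carrier G \<Longrightarrow> x \<in> carrier G \<Longrightarrow> cj (A \<inter> B) x = cj A x \<inter> cj B x"
  unfolding cj_eq by (rule inj_on_image_Int[OF inj_cj])

lemma cj_in_eq: "subgroup K G \<Longrightarrow> k \<in> K \<Longrightarrow> cj K k = K"
proof -
  assume K: "subgroup K G" and k: "k \<in> K"
  have Ks: "K \<subseteq> carrier G" using K subgroup.subset by blast
  have kc: "k \<in> carrier G" using k Ks by auto
  show ?thesis using cj_in_sub[OF K k] card_cj[OF Ks kc] finite_sub[OF Ks]
    by (simp add: card_subset_eq)
qed

context
  fixes H K
  assumes H: "H \<subseteq> carrier G" and K: "subgroup K G"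
begin

lemma Ks: "K \<subseteq> carrier G" using K subgroup.subset by blast
lemma Cs: "subgroup (CC H) G" using subgroup_CC[OF H] .

lemma DC_sub_NN: "g \<in> NN H K \<Longrightarrow> DC H K g \<subseteq> NN H K"
  unfolding DC_def using CC_mult_NN[OF H] NN_mult_right[OF K _ _ H] by blast

lemma self_DC: "g \<in> carrier G \<Longrightarrow> g \<in> DC H K g"
  unfolding DC_def using subgroup.one_closed[OF K] subgroup.one_closed[OF Cs]
  by (auto intro!: exI[of _ "\<one>"])

lemma DC_sub: assumes g: "g \<in> carrier G" and y: "y \<in> DC H K g" shows "DC H K y \<subseteq> DC H K g"
proof
  obtain c0 k0 where y0: "y = c0 \<otimes> g \<otimes> k0" "c0 \<in> CC H" "k0 \<in> K" using y unfolding DC_def by auto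
  fix z assume "z \<in> DC H K y"
  then obtain c k where z: "z = c \<otimes> y \<otimes> k" "c \<in> CC H" "k \<in> K" unfolding DC_def by auto
  have cc: "c \<in> carrier G" "c0 \<in> carrier G" using z y0 CC_sub by auto
  have kc: "k \<in> carrier G" "k0 \<in> carrier G" using z y0 Ks by auto
  have "z = (c \<otimes> c0) \<otimes> g \<otimes> (k0 \<otimes> k)" using z y0 cc kc g by (simp add: m_assoc)
  moreover have "c \<otimes> c0 \<in> CC H" using z y0 subgroup.m_closed[OF Cs] by blast
  moreover have "k0 \<otimes> k \<in> K" using z y0 subgroup.m_closed[OF K] by blast
  ultimately show "z \<in> DC H K g" unfolding DC_def by blast
qed

lemma DC_eq: assumes g: "g \<in> carrier G" and y: "y \<in> DC H K g" shows "DC H K y = DC H K g"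
proof
  show "DC H K y \<subseteq> DC H K g" using DC_sub[OF g y] .
  obtain c0 k0 where y0: "y = c0 \<otimes> g \<otimes> k0" "c0 \<in> CC H" "k0 \<in> K" using y unfolding DC_def by auto
  have cc: "c0 \<in> carrier G" using y0 CC_sub by auto
  have kc: "k0 \<in> carrier G" using y0 Ks by auto
  have yc: "y \<in> carrier G" using y0 cc kc g by simp
  have "g = inv c0 \<otimes> y \<otimes> inv k0" using y0 cc kc g by (simp add: m_assoc)
  moreover have "inv c0 \<in> CC H" using y0 subgroup.m_inv_closed[OF Cs] by blast
  moreover have "inv k0 \<in> K" using y0 subgroup.m_inv_closed[OF K] by blast
  ultimately have "g \<in> DC H K y" unfolding DC_def by blast
  then show "DC H K g \<subseteq> DC H K y" using DC_sub[OF yc] by blast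
qed

lemma ZZ_cj: assumes g: "g \<in> carrier G" and y: "y \<in> DC H K g"
  shows "\<exists>k0\<in>K. ZZ H K y = cj (ZZ H K g) k0"
proof -
  obtain c0 k0 where y0: "y = c0 \<otimes> g \<otimes> k0" "c0 \<in> CC H" "k0 \<in> K" using y unfolding DC_def by auto
  have cc: "c0 \<in> carrier G" using y0 CC_sub by auto
  have kc: "k0 \<in> carrier G" using y0 Ks by auto
  have "cj H y = cj (cj (cj H c0) g) k0" using y0 cc kc g H by (simp add: cj_cj cj_closed)
  then have cy: "cj H y = cj (cj H g) k0" using cj_by_CC[OF H y0(2)] by simp
  have Hg: "cj H g \<subseteq> carrier G" using cj_closed[OF H g] .
  have "ZZ H K y = K \<inter> CC (cj H y)" unfolding ZZ_def by auto
  also have "\<dots> = cj K k0 \<inter> cj (CC (cj H g)) k0" using cy CC_cj[OF Hg kc] cj_in_eq[OF K y0(3)] by simp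
  also have "\<dots> = cj (K \<inter> CC (cj H g)) k0" using cj_Int[OF Ks CC_sub kc] by simp
  also have "K \<inter> CC (cj H g) = ZZ H K g" unfolding ZZ_def by auto
  finally show ?thesis using y0(3) by blast
qed

lemma card_ZZ_eq: "g \<in> carrier G \<Longrightarrow> y \<in> DC H K g \<Longrightarrow> card (ZZ H K y) = card (ZZ H K g)"
proof -
  assume g: "g \<in> carrier G" and y: "y \<in> DC H K g"
  obtain k0 where k0: "k0 \<in> K" "ZZ H K y = cj (ZZ H K g) k0" using ZZ_cj[OF g y] by blast
  have "ZZ H K g \<subseteq> carrier G" unfolding ZZ_def using Ks by auto
  then show ?thesis using k0 card_cj Ks by auto
qed

lemma ZZ_CC: assumes g: "g \<in> carrier G" and z: "z \<in> ZZ H K g"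
  shows "g \<otimes> inv z \<otimes> inv g \<in> CC H"
proof -
  have zc: "z \<in> CC (cj H g)" using z unfolding ZZ_def by auto
  then have "inv z \<in> CC (cj H g)" using subgroup.m_inv_closed[OF subgroup_CC[OF cj_closed[OF H g]]] by blast
  then have "inv z \<in> cj (CC H) g" using CC_cj[OF H g] by simp
  moreover have "inv z \<in> carrier G" using zc CC_sub by auto
  ultimately show ?thesis using cj_mem_iff[OF CC_sub g] by blast
qed

lemma CC_ZZ: assumes g: "g \<in> carrier G" and w: "w \<in> K" and c: "g \<otimes> w \<otimes> inv g \<in> CC H"
  shows "w \<in> ZZ H K g"
proof -
  have wc: "w \<in> carrier G" using w Ks by auto
  have "w \<in> cj (CC H) g" using cj_mem_iff[OF CC_sub g wc] c by blast
  then show ?thesis unfolding ZZ_def using CC_cj[OF H g] w by simp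
qed

lemma fiber_card: assumes g: "g \<in> carrier G" and y: "y \<in> DC H K g"
  shows "card {ck \<in> CC H \<times> K. fst ck \<otimes> g \<otimes> snd ck = y} = card (ZZ H K g)"
proof -
  obtain c0 k0 where y0: "y = c0 \<otimes> g \<otimes> k0" "c0 \<in> CC H" "k0 \<in> K" using y unfolding DC_def by auto
  have c0c: "c0 \<in> carrier G" using y0 CC_sub by auto
  have k0c: "k0 \<in> carrier G" using y0 Ks by auto
  define f where "f z = (c0 \<otimes> g \<otimes> inv z \<otimes> inv g, z \<otimes> k0)" for z
  define f' where "f' (ck::'a \<times> 'a) = snd ck \<otimes> inv k0" for ck
  let ?F = "{ck \<in> CC H \<times> K. fst ck \<otimes> g \<otimes> snd ck = y}"
  have "bij_betw f (ZZ H K g) ?F"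
  proof (rule bij_betw_byWitness)
    show "\<forall>z\<in>ZZ H K g. f' (f z) = z"
    proof
      fix z assume "z \<in> ZZ H K g"
      then have zc: "z \<in> carrier G" unfolding ZZ_def using Ks by auto
      show "f' (f z) = z" unfolding f_def f'_def using zc k0c by (simp add: m_assoc)
    qed
    show "\<forall>ck\<in>?F. f (f' ck) = ck"
    proof
      fix ck assume ck: "ck \<in> ?F"
      obtain c k where ckd: "ck = (c, k)" by (cases ck)
      have c: "c \<in> CC H" and k: "k \<in> K" and E: "c \<otimes> g \<otimes> k = c0 \<otimes> g \<otimes> k0" using ck ckd y0 by auto
      have cc: "c \<in> carrier G" using c CC_sub by auto
      have kc: "k \<in> carrier G" using k Ks by auto
      have "c0 \<otimes> g \<otimes> inv (k \<otimes> inv k0) \<otimes> inv g = c0 \<otimes> g \<otimes> k0 \<otimes> inv k \<otimes> inv g"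
        using c0c g kc k0c by (simp add: inv_mult_group m_assoc)
      also have "\<dots> = c \<otimes> g \<otimes> k \<otimes> inv k \<otimes> inv g" using E by simp
      also have "\<dots> = c" using cc g kc by (simp add: m_assoc)
      finally have 1: "c0 \<otimes> g \<otimes> inv (k \<otimes> inv k0) \<otimes> inv g = c" .
      have 2: "k \<otimes> inv k0 \<otimes> k0 = k" using kc k0c by (simp add: m_assoc)
      show "f (f' ck) = ck" unfolding f_def f'_def ckd using 1 2 by simp
    qed
    show "f ` ZZ H K g \<subseteq> ?F"
    proof
      fix w assume "w \<in> f ` ZZ H K g"
      then obtain z where z: "z \<in> ZZ H K g" "w = f z" by auto
      have zc: "z \<in> carrier G" and zK: "z \<in> K" using z unfolding ZZ_def using Ks by auto
      have "c0 \<otimes> (g \<otimes> inv z \<otimes> inv g) \<in> CC H"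
        using ZZ_CC[OF g z(1)] y0 subgroup.m_closed[OF Cs] by blast
      moreover have "c0 \<otimes> (g \<otimes> inv z \<otimes> inv g) = c0 \<otimes> g \<otimes> inv z \<otimes> inv g"
        using c0c g zc by (simp add: m_assoc)
      moreover have "z \<otimes> k0 \<in> K" using zK y0 subgroup.m_closed[OF K] by blast
      moreover have "c0 \<otimes> g \<otimes> inv z \<otimes> inv g \<otimes> g \<otimes> (z \<otimes> k0) = y"
        using c0c g zc k0c y0 by (simp add: m_assoc)
      ultimately show "w \<in> ?F" unfolding z f_def by auto
    qed
    show "f' ` ?F \<subseteq> ZZ H K g"
    proof
      fix w assume "w \<in> f' ` ?F"
      then obtain c k where ck: "(c, k) \<in> ?F" "w = k \<otimes> inv k0" unfolding f'_def by auto
      have c: "c \<in> CC H" and k: "k \<in> K" and E: "c \<otimes> g \<otimes> k = c0 \<otimes> g \<otimes> k0" using ck y0 by auto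
      have cc: "c \<in> carrier G" using c CC_sub by auto
      have kc: "k \<in> carrier G" using k Ks by auto
      have "g \<otimes> (k \<otimes> inv k0) \<otimes> inv g = inv c \<otimes> (c \<otimes> g \<otimes> k) \<otimes> inv k0 \<otimes> inv g"
        using cc g kc k0c by (simp add: m_assoc)
      also have "\<dots> = inv c \<otimes> (c0 \<otimes> g \<otimes> k0) \<otimes> inv k0 \<otimes> inv g" using E by simp
      also have "\<dots> = inv c \<otimes> c0" using cc g c0c k0c by (simp add: m_assoc)
      finally have "g \<otimes> (k \<otimes> inv k0) \<otimes> inv g \<in> CC H"
        using c y0 subgroup.m_closed[OF Cs] subgroup.m_inv_closed[OF Cs] by simp
      moreover have "k \<otimes> inv k0 \<in> K" using k y0 subgroup.m_closed[OF K] subgroup.m_inv_closed[OF K] by blast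
      ultimately show "w \<in> ZZ H K g" using CC_ZZ[OF g] ck by simp
    qed
  qed
  then show ?thesis by (simp add: bij_betw_same_card)
qed

lemma card_DC_ZZ: assumes g: "g \<in> carrier G"
  shows "card (DC H K g) * card (ZZ H K g) = card (CC H) * card K"
proof -
  define phi where "phi ck = fst ck \<otimes> g \<otimes> snd ck" for ck
  have finCK: "finite (CC H \<times> K)" using finite_sub[OF CC_sub] finite_sub[OF Ks] by simp
  have img: "phi ` (CC H \<times> K) = DC H K g" unfolding phi_def DC_def by (auto simp: image_iff) force+
  have "card (CC H \<times> K) = (\<Sum>y\<in>phi ` (CC H \<times> K). card {ck \<in> CC H \<times> K. phi ck = y})"
    using sum.image_gen[OF finCK, of "\<lambda>_. 1" phi] by (simp only: card_eq_sum)
  also have "\<dots> = (\<Sum>y\<in>DC H K g. card (ZZ H K g))"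
    unfolding img using fiber_card[OF g] unfolding phi_def by simp
  also have "\<dots> = card (DC H K g) * card (ZZ H K g)" by simp
  finally show ?thesis by (simp add: card_cartesian_product)
qed

lemma Ft_sum1: "card (homFt G H K) * (card (CC H) * card K) = (\<Sum>g\<in>NN H K. card (ZZ H K g))"
proof -
  let ?T = "NN H K"
  have "(\<Sum>g\<in>?T. card (ZZ H K g)) = (\<Sum>S\<in>DC H K ` ?T. \<Sum>g\<in>{g\<in>?T. DC H K g = S}. card (ZZ H K g))"
    by (rule sum.image_gen[OF NN_finite])
  also have "\<dots> = (\<Sum>S\<in>DC H K ` ?T. card (CC H) * card K)"
  proof (rule sum.cong[OF refl])
    fix S assume "S \<in> DC H K ` ?T"
    then obtain a where a: "a \<in> ?T" "S = DC H K a" by auto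
    have ac: "a \<in> carrier G" using a NN_sub by auto
    have e: "{g\<in>?T. DC H K g = S} = DC H K a"
    proof
      show "{g\<in>?T. DC H K g = S} \<subseteq> DC H K a"
      proof
        fix x assume x: "x \<in> {g\<in>?T. DC H K g = S}"
        then have "x \<in> carrier G" using NN_sub by auto
        then have "x \<in> DC H K x" by (rule self_DC)
        then show "x \<in> DC H K a" using x a by simp
      qed
      show "DC H K a \<subseteq> {g\<in>?T. DC H K g = S}" using DC_sub_NN[OF a(1)] DC_eq[OF ac] a by auto
    qed
    have "(\<Sum>g\<in>DC H K a. card (ZZ H K g)) = (\<Sum>g\<in>DC H K a. card (ZZ H K a))"
      using card_ZZ_eq[OF ac] by simp
    also have "\<dots> = card (CC H) * card K" using card_DC_ZZ[OF ac] by simp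
    finally show "(\<Sum>g\<in>{g\<in>?T. DC H K g = S}. card (ZZ H K g)) = card (CC H) * card K" using e by simp
  qed
  also have "\<dots> = card (homFt G H K) * (card (CC H) * card K)" unfolding homFt_eq by simp
  finally show ?thesis by simp
qed

lemma Ft_sum2: "(\<Sum>g\<in>NN H K. card (ZZ H K g)) = (\<Sum>k\<in>K. card (NN H (CK K k)))"
proof -
  have finK: "finite K" using finite_sub[OF Ks] .
  have "(\<Sum>g\<in>NN H K. card (ZZ H K g)) = (\<Sum>g\<in>NN H K. \<Sum>k\<in>K. if k \<in> CC (cj H g) then 1 else 0)"
    unfolding ZZ_def using finK by (simp add: sum.If_cases Int_def)
  also have "\<dots> = (\<Sum>k\<in>K. \<Sum>g\<in>NN H K. if k \<in> CC (cj H g) then 1 else 0)" by (rule sum.swap)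
  also have "\<dots> = (\<Sum>k\<in>K. card (NN H (CK K k)))"
  proof (rule sum.cong[OF refl])
    fix k assume k: "k \<in> K"
    have kc: "k \<in> carrier G" using k Ks by auto
    have "{g\<in>NN H K. k \<in> CC (cj H g)} = NN H (CK K k)"
      unfolding transporter_def CK_def centralizer_of_def using kc by auto
    then show "(\<Sum>g\<in>NN H K. if k \<in> CC (cj H g) then 1 else 0) = card (NN H (CK K k))"
      using NN_finite by (simp add: sum.If_cases Int_def)
  qed
  finally show ?thesis .
qed

lemma Ft_formula: "card (homFt G H K) * (card (CC H) * card K) = (\<Sum>k\<in>K. card (NN H (CK K k)))"
  using Ft_sum1 Ft_sum2 by simp

end

end



context eg begin

definition conjR :: "'a set \<Rightarrow> 'a set \<Rightarrow> bool" where
  "conjR H K \<longleftrightarrow> (\<exists>x\<in>carrier G. K = cj H x)"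

lemma weighting_conj:
  fixes z :: "'a set \<Rightarrow> 'a set \<Rightarrow> nat"
  assumes zinv: "\<And>H K x. H \<in> Ob \<Longrightarrow> K \<in> Ob \<Longrightarrow> x \<in> carrier G \<Longrightarrow> z (cj H x) (cj K x) = z H K"
  and ztri: "\<And>H K. H \<in> Ob \<Longrightarrow> K \<in> Ob \<Longrightarrow> z H K \<noteq> 0 \<Longrightarrow> NN H K \<noteq> {}"
  and zpos: "\<And>H. H \<in> Ob \<Longrightarrow> z H H > 0"
  shows "\<exists>k. is_weighting Ob z k"
proof -
  have "\<exists>k. is_weighting Ob z k \<and> (\<forall>a\<in>Ob. \<forall>b\<in>Ob. conjR a b \<longrightarrow> k a = k b)"
  proof (rule weighting_exists[where r = card])
    show "finite Ob" by (rule finite_Ob)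
    show "\<And>a. a \<in> Ob \<Longrightarrow> conjR a a"
      unfolding conjR_def using cj_one Ob_sub by (metis one_closed)
    show "\<And>a b. a \<in> Ob \<Longrightarrow> b \<in> Ob \<Longrightarrow> conjR a b \<Longrightarrow> conjR b a"
      unfolding conjR_def by (metis Ob_sub cj_inv_cancel inv_closed)
    show "\<And>a b c. a \<in> Ob \<Longrightarrow> b \<in> Ob \<Longrightarrow> c \<in> Ob \<Longrightarrow> conjR a b \<Longrightarrow> conjR b c \<Longrightarrow> conjR a c"
      unfolding conjR_def by (metis Ob_sub cj_cj m_closed)
    show "\<And>a b. a \<in> Ob \<Longrightarrow> b \<in> Ob \<Longrightarrow> conjR a b \<Longrightarrow> card a = card b"
      unfolding conjR_def using card_cj Ob_sub by auto
    show "\<And>a b. a \<in> Ob \<Longrightarrow> b \<in> Ob \<Longrightarrow> z a b \<noteq> 0 \<Longrightarrow> card a \<le> card b \<and> (card a = card b \<longrightarrow> conjR a b)"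
    proof -
      fix a b assume ab: "a \<in> Ob" "b \<in> Ob" "z a b \<noteq> 0"
      then obtain g where g: "g \<in> carrier G" "cj a g \<subseteq> b" using ztri unfolding transporter_def by blast
      have "card a = card (cj a g)" using card_cj Ob_sub ab g by auto
      also have "\<dots> \<le> card b" using g Ob_finite_elem ab card_mono by blast
      finally have le: "card a \<le> card b" .
      have "card a = card b \<longrightarrow> conjR a b"
        using cj_eq_if_sub[OF ab(1,2) g(1,2)] g unfolding conjR_def by blast
      then show "card a \<le> card b \<and> (card a = card b \<longrightarrow> conjR a b)" using le by blast
    qed
    show "\<And>a a' b. a \<in> Ob \<Longrightarrow> a' \<in> Ob \<Longrightarrow> b \<in> Ob \<Longrightarrow> conjR a a' \<Longrightarrow>
      (\<Sum>b'\<in>{b'\<in>Ob. conjR b b'}. z a b') = (\<Sum>b'\<in>{b'\<in>Ob. conjR b b'}. z a' b')"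
    proof -
      fix a a' b assume a: "a \<in> Ob" "a' \<in> Ob" "b \<in> Ob" "conjR a a'"
      then obtain x where x: "x \<in> carrier G" "a' = cj a x" unfolding conjR_def by blast
      have ix: "inv x \<in> carrier G" using x by simp
      show "(\<Sum>b'\<in>{b'\<in>Ob. conjR b b'}. z a b') = (\<Sum>b'\<in>{b'\<in>Ob. conjR b b'}. z a' b')"
      proof (rule sum.reindex_bij_witness[where j = "\<lambda>L. cj L x" and i = "\<lambda>L. cj L (inv x)"])
        fix L assume L: "L \<in> {b'\<in>Ob. conjR b b'}"
        then have LO: "L \<in> Ob" by simp
        show "cj (cj L x) (inv x) = L" using cj_inv_cancel[OF Ob_sub[OF LO] x(1)] .
        obtain y where y: "y \<in> carrier G" "L = cj b y" using L unfolding conjR_def by auto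
        have "cj L x = cj b (y \<otimes> x)" using y x cj_cj Ob_sub a by simp
        then show "cj L x \<in> {b'\<in>Ob. conjR b b'}" using Ob_cj[OF LO x(1)] y x unfolding conjR_def by auto
        show "z a' (cj L x) = z a L" using zinv[OF a(1) LO x(1)] x by simp
      next
        fix L assume L: "L \<in> {b'\<in>Ob. conjR b b'}"
        then have LO: "L \<in> Ob" by simp
        show "cj (cj L (inv x)) x = L" using cj_inv_cancel2[OF Ob_sub[OF LO] x(1)] .
        obtain y where y: "y \<in> carrier G" "L = cj b y" using L unfolding conjR_def by auto
        have "cj L (inv x) = cj b (y \<otimes> inv x)" using y x cj_cj Ob_sub a by simp
        then show "cj L (inv x) \<in> {b'\<in>Ob. conjR b b'}" using Ob_cj[OF LO ix] y x unfolding conjR_def by auto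
      qed
    qed
    show "\<And>a. a \<in> Ob \<Longrightarrow> z a a > 0" by (rule zpos)
  qed
  then show ?thesis by blast
qed

lemma card_img_pos: "finite A \<Longrightarrow> a \<in> A \<Longrightarrow> card (f ` A) > 0"
  by (simp add: card_gt_0_iff) blast

lemma card_img_empty: "card (f ` A) \<noteq> 0 \<Longrightarrow> A \<noteq> {}"
  by auto

lemma Ob_subgroup: "H \<in> Ob \<Longrightarrow> subgroup H G"
  using Ob_iff by simp

lemma zS_eq: "card (homS H K) = (if H \<subseteq> K then 1 else 0)"
  unfolding homS_def by simp

lemma weighting_S: "\<exists>k. is_weighting Ob (\<lambda>H K. card (homS H K)) k"
proof (rule weighting_conj)
  fix H K x assume "H \<in> Ob" "K \<in> Ob" "x \<in> carrier G"
  then show "card (homS (cj H x) (cj K x)) = card (homS H K)"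
    unfolding zS_eq using cj_subset_iff[of "cj H x" K "x"] cj_mono cj_inv_cancel Ob_sub
    by (metis cj_closed inv_closed)
next
  fix H K assume "H \<in> Ob" "K \<in> Ob" "card (homS H K) \<noteq> 0"
  then have "H \<subseteq> K" unfolding zS_eq by (auto split: if_splits)
  then show "NN H K \<noteq> {}" using \<open>H \<in> Ob\<close> Ob_sub cj_one unfolding transporter_def by force
next
  fix H assume "H \<in> Ob" then show "card (homS H H) > 0" unfolding zS_eq by simp
qed

lemma coweighting_S: "is_coweighting Ob (\<lambda>H K. card (homS H K)) (\<lambda>H. - of_int (mu H))"
  unfolding is_coweighting_def
proof
  fix K assume K: "K \<in> Ob"
  have "(\<Sum>H\<in>Ob. - of_int (mu H) * of_nat (card (homS H K))) = (\<Sum>H\<in>{H\<in>Ob. H \<subseteq> K}. - (of_int (mu H) :: rat))"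
    unfolding zS_eq using finite_Ob by (simp add: sum.inter_filter[symmetric] if_distrib cong: if_cong)
  also have "\<dots> = 1" using mu_sum_Ob[OF K] by (simp add: sum_negf flip: of_int_sum)
  finally show "(\<Sum>H\<in>Ob. - of_int (mu H) * of_nat (card (homS H K))) = (1::rat)" .
qed

lemma weighting_T: "\<exists>k. is_weighting Ob (\<lambda>H K. card (homT G H K)) k"
proof (rule weighting_conj)
  fix H K x assume "H \<in> Ob" "K \<in> Ob" "x \<in> carrier G"
  then show "card (homT G (cj H x) (cj K x)) = card (homT G H K)"
    unfolding card_homT using card_NN_cj Ob_sub by blast
next
  fix H K assume "card (homT G H K) \<noteq> 0" then show "NN H K \<noteq> {}" unfolding homT_def by auto
next
  fix H assume "H \<in> Ob" then show "card (homT G H H) > 0"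
    unfolding homT_def using NN_finite one_NN Ob_sub card_gt_0_iff by blast
qed

lemma coweighting_T: "is_coweighting Ob (\<lambda>H K. card (homT G H K)) (\<lambda>H. - of_int (mu H) * 1 / of_nat (card (carrier G)))"
  by (rule coweighting_from) (simp add: card_homT)

lemma CC_card_pos: "H \<subseteq> carrier G \<Longrightarrow> card (CC H) > 0"
  using subgroup_card_pos subgroup_CC by blast

lemma weighting_F: "\<exists>k. is_weighting Ob (\<lambda>H K. card (homF G H K)) k"
proof (rule weighting_conj)
  fix H K x assume H: "H \<in> Ob" and K: "K \<in> Ob" and x: "x \<in> carrier G"
  have Hs: "H \<subseteq> carrier G" using Ob_sub H by blast
  have e: "card (homF G (cj H x) (cj K x)) * card (CC H) = card (homF G H K) * card (CC H)"
    using card_homF[OF cj_closed[OF Hs x], of "cj K x"] card_homF[OF Hs, of K]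
      card_CC_cj[OF Hs x] card_NN_cj[OF Hs Ob_sub[OF K] x] by simp
  then show "card (homF G (cj H x) (cj K x)) = card (homF G H K)"
    using CC_card_pos[OF Hs] by simp
next
  fix H K assume "card (homF G H K) \<noteq> 0" then show "NN H K \<noteq> {}" unfolding homF_def by auto
next
  fix H assume "H \<in> Ob" then show "card (homF G H H) > 0"
    unfolding homF_def by (rule card_img_pos[OF NN_finite one_NN[OF Ob_sub]])
qed

lemma coweighting_F: "is_coweighting Ob (\<lambda>H K. card (homF G H K)) (\<lambda>H. - of_int (mu H) * of_nat (card (CC H)) / of_nat (card (carrier G)))"
  by (rule coweighting_from) (metis Ob_sub card_homF of_nat_mult)

lemma Op_card_pos: "H \<subseteq> carrier G \<Longrightarrow> card (Op G p (CC H)) > 0"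
  using subgroup_card_pos subgroup_CC subgroup_Op by blast

lemma card_Op_CC_cj: "H \<subseteq> carrier G \<Longrightarrow> x \<in> carrier G \<Longrightarrow> card (Op G p (CC (cj H x))) = card (Op G p (CC H))"
  using CC_cj card_Op_cj subgroup_CC by simp

lemma weighting_L: "\<exists>k. is_weighting Ob (\<lambda>H K. card (homL G p H K)) k"
proof (rule weighting_conj)
  fix H K x assume H: "H \<in> Ob" and K: "K \<in> Ob" and x: "x \<in> carrier G"
  have Hs: "H \<subseteq> carrier G" using Ob_sub H by blast
  have e: "card (homL G p (cj H x) (cj K x)) * card (Op G p (CC H)) = card (homL G p H K) * card (Op G p (CC H))"
    using card_homL[OF cj_closed[OF Hs x], of "cj K x"] card_homL[OF Hs, of K]
      card_Op_CC_cj[OF Hs x] card_NN_cj[OF Hs Ob_sub[OF K] x] by simp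
  then show "card (homL G p (cj H x) (cj K x)) = card (homL G p H K)"
    using Op_card_pos[OF Hs] by simp
next
  fix H K assume "card (homL G p H K) \<noteq> 0" then show "NN H K \<noteq> {}" unfolding homL_def by auto
next
  fix H assume "H \<in> Ob" then show "card (homL G p H H) > 0"
    unfolding homL_def by (rule card_img_pos[OF NN_finite one_NN[OF Ob_sub]])
qed

lemma coweighting_L: "is_coweighting Ob (\<lambda>H K. card (homL G p H K)) (\<lambda>H. - of_int (mu H) * of_nat (card (Op G p (CC H))) / of_nat (card (carrier G)))"
  by (rule coweighting_from) (metis Ob_sub card_homL of_nat_mult)

lemma weighting_O: "\<exists>k. is_weighting Ob (\<lambda>H K. card (homO G H K)) k"
proof (rule weighting_conj)
  fix H K x assume H: "H \<in> Ob" and K: "K \<in> Ob" and x: "x \<in> carrier G"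
  have Hs: "H \<subseteq> carrier G" using Ob_sub H by blast
  have Ks: "K \<subseteq> carrier G" using Ob_sub K by blast
  have e: "card (homO G (cj H x) (cj K x)) * card K = card (homO G H K) * card K"
    using card_homO[OF subgroup_cj[OF Ob_subgroup[OF K] x] cj_closed[OF Hs x]]
      card_homO[OF Ob_subgroup[OF K] Hs] card_cj[OF Ks x] card_NN_cj[OF Hs Ks x] by simp
  then show "card (homO G (cj H x) (cj K x)) = card (homO G H K)"
    using Ob_card_pos[OF K] by simp
next
  fix H K assume "card (homO G H K) \<noteq> 0" then show "NN H K \<noteq> {}" unfolding homO_def by auto
next
  fix H assume "H \<in> Ob" then show "card (homO G H H) > 0"
    unfolding homO_def by (rule card_img_pos[OF NN_finite one_NN[OF Ob_sub]])
qed

lemma CK_sub: "CK K k \<subseteq> K" unfolding CK_def by auto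

lemma CK_cj: assumes K: "K \<subseteq> carrier G" and k: "k \<in> K" and x: "x \<in> carrier G"
  shows "CK (cj K x) (inv x \<otimes> k \<otimes> x) = cj (CK K k) x"
proof (rule Set.set_eqI)
  fix y
  have kc: "k \<in> carrier G" using k K by auto
  show "y \<in> CK (cj K x) (inv x \<otimes> k \<otimes> x) \<longleftrightarrow> y \<in> cj (CK K k) x"
  proof (cases "y \<in> carrier G")
    case False
    then show ?thesis using cj_closed[OF _ x, of "CK K k"] CK_sub K cj_closed[OF K x]
      unfolding CK_def by blast
  next
    case y: True
    have i1: "x \<otimes> (inv x \<otimes> k \<otimes> x) \<otimes> inv x = k" using kc x by (simp add: m_assoc)
    have "y \<in> CK (cj K x) (inv x \<otimes> k \<otimes> x) \<longleftrightarrow> x \<otimes> y \<otimes> inv x \<in> K \<and> y \<otimes> (inv x \<otimes> k \<otimes> x) = (inv x \<otimes> k \<otimes> x) \<otimes> y"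
      unfolding CK_def using cj_mem_iff[OF K x y] by simp
    also have "\<dots> \<longleftrightarrow> x \<otimes> y \<otimes> inv x \<in> K \<and> (x \<otimes> y \<otimes> inv x) \<otimes> k = k \<otimes> (x \<otimes> y \<otimes> inv x)"
      using comm_cj[of y "inv x \<otimes> k \<otimes> x" x] y kc x i1 by simp
    also have "\<dots> \<longleftrightarrow> x \<otimes> y \<otimes> inv x \<in> CK K k" unfolding CK_def by simp
    also have "\<dots> \<longleftrightarrow> y \<in> cj (CK K k) x" using cj_mem_iff[OF _ x y, of "CK K k"] CK_sub K by blast
    finally show ?thesis .
  qed
qed

lemma Ft_sum_cj: assumes H: "H \<subseteq> carrier G" and K: "subgroup K G" and x: "x \<in> carrier G"
  shows "(\<Sum>k\<in>cj K x. card (NN (cj H x) (CK (cj K x) k))) = (\<Sum>k\<in>K. card (NN H (CK K k)))"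
proof -
  have Ks: "K \<subseteq> carrier G" using K subgroup.subset by blast
  have "(\<Sum>k\<in>cj K x. card (NN (cj H x) (CK (cj K x) k))) = (\<Sum>k\<in>K. card (NN (cj H x) (CK (cj K x) (inv x \<otimes> k \<otimes> x))))"
    unfolding cj_eq by (rule sum.reindex[OF inj_on_subset[OF inj_cj[OF x] Ks], unfolded comp_def])
  also have "\<dots> = (\<Sum>k\<in>K. card (NN H (CK K k)))"
  proof (rule sum.cong[OF refl])
    fix k assume k: "k \<in> K"
    have "CK K k \<subseteq> carrier G" using CK_sub Ks by blast
    then show "card (NN (cj H x) (CK (cj K x) (inv x \<otimes> k \<otimes> x))) = card (NN H (CK K k))"
      using CK_cj[OF Ks k x] card_NN_cj[OF H _ x] by simp
  qed
  finally show ?thesis .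
qed

lemma weighting_Ft: "\<exists>k. is_weighting Ob (\<lambda>H K. card (homFt G H K)) k"
proof (rule weighting_conj)
  fix H K x assume H: "H \<in> Ob" and K: "K \<in> Ob" and x: "x \<in> carrier G"
  have Hs: "H \<subseteq> carrier G" using Ob_sub H by blast
  have Ks: "K \<subseteq> carrier G" using Ob_sub K by blast
  have KK: "subgroup K G" using Ob_subgroup K by blast
  have e: "card (homFt G (cj H x) (cj K x)) * (card (CC H) * card K) = card (homFt G H K) * (card (CC H) * card K)"
    using Ft_formula[OF cj_closed[OF Hs x] subgroup_cj[OF KK x]] Ft_formula[OF Hs KK]
      card_CC_cj[OF Hs x] card_cj[OF Ks x] Ft_sum_cj[OF Hs KK x] by simp
  then show "card (homFt G (cj H x) (cj K x)) = card (homFt G H K)"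
    using CC_card_pos[OF Hs] Ob_card_pos[OF K] by simp
next
  fix H K assume "card (homFt G H K) \<noteq> 0" then show "NN H K \<noteq> {}" unfolding homFt_def by auto
next
  fix H assume "H \<in> Ob" then show "card (homFt G H H) > 0"
    unfolding homFt_def by (rule card_img_pos[OF NN_finite one_NN[OF Ob_sub]])
qed

lemma CK_Ob: assumes K: "K \<in> Ob" and k: "k \<in> K" shows "CK K k \<in> Ob"
proof -
  have KK: "subgroup K G" using Ob_subgroup K by blast
  have Ks: "K \<subseteq> carrier G" using Ob_sub K by blast
  have kc: "k \<in> carrier G" using k Ks by auto
  have e: "CK K k = \<Inter> {K, CC {k}}" unfolding CK_def centralizer_of_def using Ks by auto
  have sg: "subgroup (CK K k) G" unfolding e
    by (rule subgroups_Inter) (use KK subgroup_CC[of "{k}"] kc in auto)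
  have "CK K k \<noteq> {\<one>}"
  proof
    assume c: "CK K k = {\<one>}"
    have "k \<in> CK K k" unfolding CK_def using k by simp
    then have "k = \<one>" using c by simp
    then have "CK K k = K" unfolding CK_def using Ks by auto
    then show False using c K Ob_iff by simp
  qed
  then show ?thesis using sub_Ob[OF K sg CK_sub] by simp
qed

lemma coweighting_Ft: "is_coweighting Ob (\<lambda>H K. card (homFt G H K)) (\<lambda>H. - of_int (mu H) * of_nat (card (CC H)) / of_nat (card (carrier G)))"
  unfolding is_coweighting_def
proof
  fix K assume K: "K \<in> Ob"
  have KK: "subgroup K G" using Ob_subgroup K by blast
  have Kpos: "card K > 0" using Ob_card_pos[OF K] .
  have finK: "finite K" using Ob_finite_elem[OF K] .
  have Gpos: "card (carrier G) > 0" by (rule card_G_pos)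
  have zf: "of_nat (card (homFt G H K)) * of_nat (card (CC H)) = (\<Sum>k\<in>K. of_nat (card (NN H (CK K k)))) / (of_nat (card K) :: rat)"
    if H: "H \<in> Ob" for H
  proof -
    have "of_nat (card (homFt G H K)) * (of_nat (card (CC H)) * of_nat (card K)) = (\<Sum>k\<in>K. (of_nat (card (NN H (CK K k))) :: rat))"
      using Ft_formula[OF Ob_sub[OF H] KK] by (metis of_nat_mult of_nat_sum)
    then show ?thesis using Kpos by (simp add: field_simps)
  qed
  have "(\<Sum>H\<in>Ob. - of_int (mu H) * of_nat (card (CC H)) / of_nat (card (carrier G)) * of_nat (card (homFt G H K)))
      = (\<Sum>H\<in>Ob. (\<Sum>k\<in>K. - of_int (mu H) * of_nat (card (NN H (CK K k)))) / (of_nat (card K) * of_nat (card (carrier G))) :: rat)"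
  proof (rule sum.cong[OF refl])
    fix H assume H: "H \<in> Ob"
    show "- of_int (mu H) * of_nat (card (CC H)) / of_nat (card (carrier G)) * of_nat (card (homFt G H K))
      = ((\<Sum>k\<in>K. - of_int (mu H) * of_nat (card (NN H (CK K k)))) / (of_nat (card K) * of_nat (card (carrier G))) :: rat)"
      using zf[OF H] by (simp add: sum_negf sum_distrib_left[symmetric] field_simps)
  qed
  also have "\<dots> = (\<Sum>k\<in>K. (\<Sum>H\<in>Ob. - of_int (mu H) * of_nat (card (NN H (CK K k))))) / (of_nat (card K) * of_nat (card (carrier G)))"
    by (simp add: sum_divide_distrib[symmetric] sum.swap[of _ Ob K])
  also have "\<dots> = (\<Sum>k\<in>K. of_nat (card (carrier G))) / (of_nat (card K) * of_nat (card (carrier G)))"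
    using mu_NN_sum[OF CK_Ob[OF K]] by simp
  also have "\<dots> = 1" using Kpos Gpos by simp
  finally show "(\<Sum>H\<in>Ob. - of_int (mu H) * of_nat (card (CC H)) / of_nat (card (carrier G)) * of_nat (card (homFt G H K))) = (1::rat)" .
qed

end



context eg begin

definition gens :: "'a set \<Rightarrow> nat" where
  "gens H = card {h \<in> H. generate G {h} = H}"

lemma gen_cj: assumes h: "h \<in> carrier G" and x: "x \<in> carrier G"
  shows "generate G {inv x \<otimes> h \<otimes> x} = cj (generate G {h}) x"
proof -
  have hx: "inv x \<otimes> h \<otimes> x \<in> carrier G" using h x by simp
  have hom: "group_hom G G (\<lambda>h. inv x \<otimes> h \<otimes> x)" by (rule cj_hom[OF x])
  have "generate G {inv x \<otimes> h \<otimes> x} = {(inv x \<otimes> h \<otimes> x) [^] k | k. k \<in> (UNIV :: nat set)}"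
    by (rule generate_pow_on_finite_carrier[OF fin hx])
  also have "\<dots> = {inv x \<otimes> h [^] k \<otimes> x | k. k \<in> (UNIV :: nat set)}"
    using group_hom.hom_nat_pow[OF hom h] by simp
  also have "\<dots> = (\<lambda>h. inv x \<otimes> h \<otimes> x) ` {h [^] k | k. k \<in> (UNIV :: nat set)}"
    by blast
  also have "\<dots> = cj (generate G {h}) x"
    unfolding cj_eq generate_pow_on_finite_carrier[OF fin h] ..
  finally show ?thesis .
qed

lemma gen_sub: "h \<in> carrier G \<Longrightarrow> generate G {h} \<subseteq> carrier G"
  using generate_is_subgroup subgroup.subset by blast

lemma gens_cj: assumes H: "H \<in> Ob" and x: "x \<in> carrier G" shows "gens (cj H x) = gens H"
proof -
  have Hs: "H \<subseteq> carrier G" using Ob_sub H by blast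
  have "{h \<in> cj H x. generate G {h} = cj H x} = (\<lambda>h. inv x \<otimes> h \<otimes> x) ` {h \<in> H. generate G {h} = H}"
  proof
    show "{h \<in> cj H x. generate G {h} = cj H x} \<subseteq> (\<lambda>h. inv x \<otimes> h \<otimes> x) ` {h \<in> H. generate G {h} = H}"
    proof
      fix y assume y: "y \<in> {h \<in> cj H x. generate G {h} = cj H x}"
      then obtain h where h: "h \<in> H" "y = inv x \<otimes> h \<otimes> x" unfolding cj_eq by auto
      have hc: "h \<in> carrier G" using h Hs by auto
      have "cj (generate G {h}) x = cj H x" using y h gen_cj[OF hc x] by simp
      then have "generate G {h} = H" using cj_inj[OF gen_sub[OF hc] Hs x] by simp
      then show "y \<in> (\<lambda>h. inv x \<otimes> h \<otimes> x) ` {h \<in> H. generate G {h} = H}" using h by auto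
    qed
    show "(\<lambda>h. inv x \<otimes> h \<otimes> x) ` {h \<in> H. generate G {h} = H} \<subseteq> {h \<in> cj H x. generate G {h} = cj H x}"
      using gen_cj[OF _ x] Hs unfolding cj_eq by auto
  qed
  moreover have "inj_on (\<lambda>h. inv x \<otimes> h \<otimes> x) {h \<in> H. generate G {h} = H}"
    by (rule inj_on_subset[OF inj_cj[OF x]]) (use Hs in auto)
  ultimately show ?thesis unfolding gens_def by (simp add: card_image)
qed

lemma gens_sum: assumes K: "K \<in> Ob" shows "(\<Sum>L\<in>{L\<in>Ob. L \<subseteq> K}. gens L) = card K - 1"
proof -
  have KK: "subgroup K G" using K Ob_iff by simp
  have Ks: "K \<subseteq> carrier G" using Ob_sub K by blast
  let ?A = "\<lambda>L. {h \<in> L. generate G {h} = L}"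
  have fin1: "finite {L\<in>Ob. L \<subseteq> K}" using finite_Ob by simp
  have "(\<Sum>L\<in>{L\<in>Ob. L \<subseteq> K}. gens L) = card (\<Union>L\<in>{L\<in>Ob. L \<subseteq> K}. ?A L)"
    unfolding gens_def
    by (rule card_UN_disjoint[symmetric]) (use fin1 Ob_finite_elem in auto)
  also have "(\<Union>L\<in>{L\<in>Ob. L \<subseteq> K}. ?A L) = K - {\<one>}"
  proof
    show "(\<Union>L\<in>{L\<in>Ob. L \<subseteq> K}. ?A L) \<subseteq> K - {\<one>}"
    proof
      fix h assume "h \<in> (\<Union>L\<in>{L\<in>Ob. L \<subseteq> K}. ?A L)"
      then obtain L where L: "L \<in> Ob" "L \<subseteq> K" "h \<in> L" "generate G {h} = L" by auto
      have "h \<noteq> \<one>" using L generate_one Ob_iff by auto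
      then show "h \<in> K - {\<one>}" using L by auto
    qed
    show "K - {\<one>} \<subseteq> (\<Union>L\<in>{L\<in>Ob. L \<subseteq> K}. ?A L)"
    proof
      fix h assume h: "h \<in> K - {\<one>}"
      have hc: "h \<in> carrier G" using h Ks by auto
      let ?L = "generate G {h}"
      have sg: "subgroup ?L G" using generate_is_subgroup hc by simp
      have LK: "?L \<subseteq> K" using generate_subgroup_incl[OF _ KK] h by simp
      have hL: "h \<in> ?L" by (simp add: generate.incl)
      then have "?L \<noteq> {\<one>}" using h by auto
      then have "?L \<in> Ob" using sub_Ob[OF K sg LK] by simp
      then show "h \<in> (\<Union>L\<in>{L\<in>Ob. L \<subseteq> K}. ?A L)" using LK hL by auto
    qed
  qed
  also have "card (K - {\<one>}) = card K - 1"
    using subgroup.one_closed[OF KK] Ob_finite_elem[OF K] by simp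
  finally show ?thesis .
qed

lemma coweighting_O: "is_coweighting Ob (\<lambda>H K. card (homO G H K))
    (\<lambda>H. (of_nat (gens H) - of_int (mu H)) / of_nat (card (carrier G)))"
  unfolding is_coweighting_def
proof
  fix K assume K: "K \<in> Ob"
  have KK: "subgroup K G" using K Ob_iff by simp
  have Kpos: "card K > 0" using Ob_card_pos[OF K] .
  have Gpos: "card (carrier G) > 0" by (rule card_G_pos)
  have zO: "(of_nat (card (homO G H K)) :: rat) = of_nat (card (NN H K)) / of_nat (card K)" if H: "H \<in> Ob" for H
    using card_homO[OF KK Ob_sub[OF H]] Kpos by (simp add: field_simps flip: of_nat_mult)
  have s1: "(\<Sum>H\<in>Ob. of_nat (gens H) * of_nat (card (NN H K))) = of_nat (card (carrier G)) * (\<Sum>L\<in>{L\<in>Ob. L \<subseteq> K}. (of_nat (gens L) :: rat))"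
    by (rule NN_reindex[OF K]) (simp add: gens_cj)
  have s2: "(\<Sum>L\<in>{L\<in>Ob. L \<subseteq> K}. (of_nat (gens L) :: rat)) = of_nat (card K) - 1"
    using gens_sum[OF K] Kpos by (simp add: of_nat_diff flip: of_nat_sum)
  have "(\<Sum>H\<in>Ob. (of_nat (gens H) - of_int (mu H)) / of_nat (card (carrier G)) * of_nat (card (homO G H K)))
      = (((\<Sum>H\<in>Ob. of_nat (gens H) * of_nat (card (NN H K))) + (\<Sum>H\<in>Ob. - of_int (mu H) * of_nat (card (NN H K))))
          / (of_nat (card (carrier G)) * of_nat (card K)) :: rat)"
  proof -
    have "(\<Sum>H\<in>Ob. (of_nat (gens H) - of_int (mu H)) / of_nat (card (carrier G)) * of_nat (card (homO G H K)))
      = (\<Sum>H\<in>Ob. (of_nat (gens H) * of_nat (card (NN H K)) + - of_int (mu H) * of_nat (card (NN H K))) / (of_nat (card (carrier G)) * of_nat (card K)) :: rat)"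
      by (rule sum.cong[OF refl]) (simp add: zO field_simps)
    also have "\<dots> = ((\<Sum>H\<in>Ob. of_nat (gens H) * of_nat (card (NN H K))) + (\<Sum>H\<in>Ob. - of_int (mu H) * of_nat (card (NN H K))))
          / (of_nat (card (carrier G)) * of_nat (card K))"
      by (simp add: sum_divide_distrib[symmetric] sum.distrib sum_subtractf sum_negf)
    finally show ?thesis .
  qed
  also have "\<dots> = (of_nat (card (carrier G)) * (of_nat (card K) - 1) + of_nat (card (carrier G)))
          / (of_nat (card (carrier G)) * of_nat (card K))"
    using s1 s2 mu_NN_sum[OF K] by simp
  also have "\<dots> = (1::rat)" using Gpos Kpos by (simp add: field_simps)
  finally show "(\<Sum>H\<in>Ob. (of_nat (gens H) - of_int (mu H)) / of_nat (card (carrier G)) * of_nat (card (homO G H K))) = (1::rat)" .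
qed

lemma gens_cyclic: assumes C: "C \<in> Ob" and cyc: "cyclic_subgroup G C"
  shows "p * gens C = (p - 1) * card C"
proof -
  obtain a where a: "a \<in> carrier G" "C = generate G {a}" using cyc unfolding cyclic_subgroup_def by blast
  define n where "n = ord a"
  have cardC: "card C = n" unfolding n_def a(2) using generate_pow_card[OF a(1)] by simp
  have Ceq: "C = (\<lambda>i. a [^] i) ` {0 .. n - 1}"
    unfolding a(2) n_def using generate_pow_on_finite_carrier[OF fin a(1)] ord_elems[OF fin a(1)] by auto
  have CC: "subgroup C G" using C Ob_iff by simp
  have key: "generate G {a [^] i} = C \<longleftrightarrow> coprime i n" for i
  proof -
    have ai: "a [^] i \<in> carrier G" using a by simp
    have ain: "a [^] i \<in> C" using generate_pow_on_finite_carrier[OF fin a(1)] a(2) by blast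
    have sub: "generate G {a [^] i} \<subseteq> C" using generate_subgroup_incl[OF _ CC] ain by simp
    have "generate G {a [^] i} = C \<longleftrightarrow> card (generate G {a [^] i}) = card C"
      using sub Ob_finite_elem[OF C] card_subset_eq by blast
    also have "\<dots> \<longleftrightarrow> ord (a [^] i) = ord a"
      using generate_pow_card[OF ai] cardC n_def by simp
    also have "\<dots> \<longleftrightarrow> coprime i n" using pow_ord_eq_ord_iff[OF fin a(1)] n_def by simp
    finally show ?thesis .
  qed
  have "{h \<in> C. generate G {h} = C} = (\<lambda>i. a [^] i) ` {i \<in> {0 .. n - 1}. coprime i n}"
    using key Ceq by auto
  moreover have "inj_on (\<lambda>i. a [^] i) {i \<in> {0 .. n - 1}. coprime i n}"
    by (rule inj_on_subset[OF ord_inj[OF a(1)]]) (auto simp: n_def)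
  ultimately have g1: "gens C = card {i \<in> {0 .. n - 1}. coprime i n}"
    unfolding gens_def by (simp add: card_image)
  obtain k where k: "card C = p ^ k" using C Ob_iff is_p_power_def by blast
  have p1: "p > 1" using prime_p prime_gt_1_nat by blast
  have "card C \<noteq> 1"
  proof
    assume "card C = 1"
    then obtain c where "C = {c}" using card_1_singletonE by blast
    then show False using C Ob_iff subgroup.one_closed by force
  qed
  then have k0: "k > 0" using k by (cases k) auto
  have n1: "n > 1" using cardC k k0 p1 by (metis \<open>card C \<noteq> 1\<close> Ob_card_pos[OF C] less_one nat_neq_iff)
  have "{i \<in> {0 .. n - 1}. coprime i n} = totatives n"
  proof -
    have "\<not> coprime 0 n" using n1 by simp
    moreover have "\<not> coprime n n" using n1 by simp
    ultimately show ?thesis unfolding totatives_def using n1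
      by (auto simp: le_less)
  qed
  then have "gens C = totient n" using g1 totient_def by simp
  also have "\<dots> = p ^ (k - 1) * (p - 1)" using totient_prime_power[OF prime_p k0] cardC k by simp
  finally have "p * gens C = p ^ k * (p - 1)" using k0 by (simp add: power_eq_if)
  then show ?thesis using k by simp
qed

lemma gens_cyclic_if: "gens C \<noteq> 0 \<Longrightarrow> C \<in> Ob \<Longrightarrow> cyclic_subgroup G C"
proof -
  assume g: "gens C \<noteq> 0" and C: "C \<in> Ob"
  then have "{h \<in> C. generate G {h} = C} \<noteq> {}" unfolding gens_def by (metis card.empty)
  then obtain h where h: "h \<in> C" "generate G {h} = C" by auto
  have "h \<in> carrier G" using h Ob_sub C by auto
  then show ?thesis unfolding cyclic_subgroup_def using h C Ob_iff by auto
qed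

lemma cyclic_cj: "C \<in> Ob \<Longrightarrow> x \<in> carrier G \<Longrightarrow> cyclic_subgroup G C \<Longrightarrow> cyclic_subgroup G (cj C x)"
proof -
  assume C: "C \<in> Ob" and x: "x \<in> carrier G" and cyc: "cyclic_subgroup G C"
  obtain a where a: "a \<in> carrier G" "C = generate G {a}" using cyc unfolding cyclic_subgroup_def by blast
  have "cj C x = generate G {inv x \<otimes> a \<otimes> x}" using gen_cj[OF a(1) x] a by simp
  moreover have "inv x \<otimes> a \<otimes> x \<in> carrier G" using a x by simp
  moreover have "subgroup (cj C x) G" using Ob_cj[OF C x] Ob_iff by simp
  ultimately show ?thesis unfolding cyclic_subgroup_def by blast
qed

end



context eg begin

lemma conj_class_eq: "conj_class G H = (\<lambda>g. cj H g) ` carrier G"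
  unfolding conj_class_def by auto

lemma conj_class_cj: assumes H: "H \<subseteq> carrier G" and x: "x \<in> carrier G"
  shows "conj_class G (cj H x) = conj_class G H"
proof
  show "conj_class G (cj H x) \<subseteq> conj_class G H"
    unfolding conj_class_eq using cj_cj[OF H x] x by auto
  show "conj_class G H \<subseteq> conj_class G (cj H x)"
  proof
    fix S assume "S \<in> conj_class G H"
    then obtain g where g: "g \<in> carrier G" "S = cj H g" unfolding conj_class_eq by auto
    have "cj (cj H x) (inv x \<otimes> g) = cj H g" using cj_cj[OF H x] x g by (simp add: m_assoc[symmetric])
    then show "S \<in> conj_class G (cj H x)" unfolding conj_class_eq using g x by force
  qed
qed

lemma NN_self: "H \<in> Ob \<Longrightarrow> n \<in> NN H H \<Longrightarrow> cj H n = H"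
  using cj_eq_if_sub NN_sub unfolding transporter_def by blast

lemma orbit_stab: assumes H: "H \<in> Ob"
  shows "card (conj_class G H) * card (NN H H) = card (carrier G)"
proof -
  have Hs: "H \<subseteq> carrier G" using Ob_sub H by blast
  have fib: "{g \<in> carrier G. cj H g = cj H y} = (\<lambda>n. n \<otimes> y) ` NN H H" if y: "y \<in> carrier G" for y
  proof
    show "{g \<in> carrier G. cj H g = cj H y} \<subseteq> (\<lambda>n. n \<otimes> y) ` NN H H"
    proof
      fix g assume g: "g \<in> {g \<in> carrier G. cj H g = cj H y}"
      have gc: "g \<in> carrier G" using g by simp
      have "cj H (g \<otimes> inv y) = cj (cj H g) (inv y)" using cj_cj[OF Hs gc] y by simp
      also have "\<dots> = H" using g cj_inv_cancel[OF Hs y] by simp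
      finally have "g \<otimes> inv y \<in> NN H H" unfolding transporter_def using gc y by simp
      moreover have "g = (g \<otimes> inv y) \<otimes> y" using gc y by (simp add: m_assoc)
      ultimately show "g \<in> (\<lambda>n. n \<otimes> y) ` NN H H" by blast
    qed
    show "(\<lambda>n. n \<otimes> y) ` NN H H \<subseteq> {g \<in> carrier G. cj H g = cj H y}"
    proof
      fix g assume "g \<in> (\<lambda>n. n \<otimes> y) ` NN H H"
      then obtain n where n: "n \<in> NN H H" "g = n \<otimes> y" by auto
      have nc: "n \<in> carrier G" using n NN_sub by auto
      have "cj H g = cj (cj H n) y" using cj_cj[OF Hs nc y] n by simp
      also have "\<dots> = cj H y" using NN_self[OF H n(1)] by simp
      finally show "g \<in> {g \<in> carrier G. cj H g = cj H y}" using n nc y by simp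
    qed
  qed
  have cfib: "card {g \<in> carrier G. cj H g = cj H y} = card (NN H H)" if y: "y \<in> carrier G" for y
  proof -
    have "inj_on (\<lambda>n. n \<otimes> y) (NN H H)"
    proof (rule inj_onI)
      fix a b assume ab: "a \<in> NN H H" "b \<in> NN H H" "a \<otimes> y = b \<otimes> y"
      have "a \<in> carrier G" "b \<in> carrier G" using ab NN_sub[of H H] by auto
      then show "a = b" using ab(3) y r_cancel by blast
    qed
    then show ?thesis using fib[OF y] by (simp add: card_image)
  qed
  have "card (carrier G) = (\<Sum>S\<in>(\<lambda>g. cj H g) ` carrier G. card {g \<in> carrier G. cj H g = S})"
    using sum.image_gen[OF fin, of "\<lambda>_. 1" "\<lambda>g. cj H g"] by (simp only: card_eq_sum)
  also have "\<dots> = (\<Sum>S\<in>(\<lambda>g. cj H g) ` carrier G. card (NN H H))"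
    using cfib by (intro sum.cong refl) auto
  also have "\<dots> = card (conj_class G H) * card (NN H H)" unfolding conj_class_eq by simp
  finally show ?thesis by simp
qed

lemma class_sum:
  fixes f :: "'a set \<Rightarrow> rat"
  assumes S: "S \<subseteq> Ob" and cl: "\<And>H x. H \<in> S \<Longrightarrow> x \<in> carrier G \<Longrightarrow> cj H x \<in> S"
  and finv: "\<And>H x. H \<in> S \<Longrightarrow> x \<in> carrier G \<Longrightarrow> f (cj H x) = f H"
  shows "(\<Sum>H\<in>S. f H * of_nat (card (NN H H)) / of_nat (card (carrier G))) = sum_classes G S f"
proof -
  have finS: "finite S" using S finite_Ob finite_subset by blast
  let ?w = "\<lambda>H. f H * of_nat (card (NN H H)) / of_nat (card (carrier G))"
  have "(\<Sum>H\<in>S. ?w H) = (\<Sum>Cl\<in>conj_class G ` S. \<Sum>H\<in>{H\<in>S. conj_class G H = Cl}. ?w H)"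
    by (rule sum.image_gen[OF finS])
  also have "\<dots> = (\<Sum>Cl\<in>conj_class G ` S. f (SOME H. H \<in> Cl \<and> H \<in> S))"
  proof (rule sum.cong[OF refl])
    fix Cl assume "Cl \<in> conj_class G ` S"
    then obtain H0 where H0: "H0 \<in> S" "Cl = conj_class G H0" by auto
    have H0O: "H0 \<in> Ob" using H0 S by auto
    have H0s: "H0 \<subseteq> carrier G" using Ob_sub H0O by blast
    have e: "{H\<in>S. conj_class G H = Cl} = Cl"
    proof
      show "{H\<in>S. conj_class G H = Cl} \<subseteq> Cl"
      proof
        fix H assume H: "H \<in> {H\<in>S. conj_class G H = Cl}"
        have "H \<in> conj_class G H" unfolding conj_class_eq using cj_one[OF Ob_sub] H S
          by (metis (no_types, lifting) image_iff mem_Collect_eq one_closed subsetD)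
        then show "H \<in> Cl" using H by simp
      qed
      show "Cl \<subseteq> {H\<in>S. conj_class G H = Cl}"
      proof
        fix H assume "H \<in> Cl"
        then obtain x where x: "x \<in> carrier G" "H = cj H0 x" unfolding H0(2) conj_class_eq by auto
        then show "H \<in> {H\<in>S. conj_class G H = Cl}"
          using cl[OF H0(1) x(1)] conj_class_cj[OF H0s x(1)] H0(2) by simp
      qed
    qed
    have wc: "?w H = ?w H0" if H: "H \<in> Cl" for H
    proof -
      obtain x where x: "x \<in> carrier G" "H = cj H0 x" using H H0 unfolding conj_class_eq by auto
      show ?thesis using finv[OF H0(1) x(1)] card_NN_cj[OF H0s H0s x(1)] x by simp
    qed
    have "(\<Sum>H\<in>{H\<in>S. conj_class G H = Cl}. ?w H) = of_nat (card Cl) * ?w H0"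
    proof -
      have "(\<Sum>H\<in>Cl. ?w H) = (\<Sum>H\<in>Cl. ?w H0)" by (rule sum.cong[OF refl]) (rule wc)
      then show ?thesis unfolding e by simp
    qed
    also have "\<dots> = f H0" using orbit_stab[OF H0O] H0(2) card_G_pos
      by (simp add: field_simps flip: of_nat_mult)
    also have "f H0 = f (SOME H. H \<in> Cl \<and> H \<in> S)"
    proof -
      have "H0 \<in> Cl \<and> H0 \<in> S" using H0 e by auto
      then have "(SOME H. H \<in> Cl \<and> H \<in> S) \<in> Cl" by (metis (mono_tags, lifting) someI)
      then obtain x where x: "x \<in> carrier G" "(SOME H. H \<in> Cl \<and> H \<in> S) = cj H0 x"
        using H0(2) unfolding conj_class_eq by auto
      then show ?thesis using finv[OF H0(1) x(1)] by simp
    qed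
    finally show "(\<Sum>H\<in>{H\<in>S. conj_class G H = Cl}. ?w H) = f (SOME H. H \<in> Cl \<and> H \<in> S)" .
  qed
  finally show ?thesis unfolding sum_classes_def conj_classes_def .
qed

end



context eg begin

lemma zT_inv: "H \<in> Ob \<Longrightarrow> K \<in> Ob \<Longrightarrow> x \<in> carrier G \<Longrightarrow> card (homT G (cj H x) (cj K x)) = card (homT G H K)"
  unfolding card_homT using card_NN_cj Ob_sub by blast

lemma zF_inv: assumes H: "H \<in> Ob" and K: "K \<in> Ob" and x: "x \<in> carrier G"
  shows "card (homF G (cj H x) (cj K x)) = card (homF G H K)"
proof -
  have Hs: "H \<subseteq> carrier G" using Ob_sub H by blast
  have e: "card (homF G (cj H x) (cj K x)) * card (CC H) = card (homF G H K) * card (CC H)"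
    using card_homF[OF cj_closed[OF Hs x], of "cj K x"] card_homF[OF Hs, of K]
      card_CC_cj[OF Hs x] card_NN_cj[OF Hs Ob_sub[OF K] x] by simp
  then show ?thesis using CC_card_pos[OF Hs] by simp
qed

lemma zL_inv: assumes H: "H \<in> Ob" and K: "K \<in> Ob" and x: "x \<in> carrier G"
  shows "card (homL G p (cj H x) (cj K x)) = card (homL G p H K)"
proof -
  have Hs: "H \<subseteq> carrier G" using Ob_sub H by blast
  have e: "card (homL G p (cj H x) (cj K x)) * card (Op G p (CC H)) = card (homL G p H K) * card (Op G p (CC H))"
    using card_homL[OF cj_closed[OF Hs x], of "cj K x"] card_homL[OF Hs, of K]
      card_Op_CC_cj[OF Hs x] card_NN_cj[OF Hs Ob_sub[OF K] x] by simp
  then show ?thesis using Op_card_pos[OF Hs] by simp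
qed

lemma zO_inv: assumes H: "H \<in> Ob" and K: "K \<in> Ob" and x: "x \<in> carrier G"
  shows "card (homO G (cj H x) (cj K x)) = card (homO G H K)"
proof -
  have Hs: "H \<subseteq> carrier G" using Ob_sub H by blast
  have Ks: "K \<subseteq> carrier G" using Ob_sub K by blast
  have e: "card (homO G (cj H x) (cj K x)) * card K = card (homO G H K) * card K"
    using card_homO[OF subgroup_cj[OF Ob_subgroup[OF K] x] cj_closed[OF Hs x]]
      card_homO[OF Ob_subgroup[OF K] Hs] card_cj[OF Ks x] card_NN_cj[OF Hs Ks x] by simp
  then show ?thesis using Ob_card_pos[OF K] by simp
qed

lemma zL_pos: "H \<in> Ob \<Longrightarrow> card (homL G p H H) > 0"
  unfolding homL_def by (rule card_img_pos[OF NN_finite one_NN[OF Ob_sub]])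
lemma zF_pos: "H \<in> Ob \<Longrightarrow> card (homF G H H) > 0"
  unfolding homF_def by (rule card_img_pos[OF NN_finite one_NN[OF Ob_sub]])
lemma zO_pos: "H \<in> Ob \<Longrightarrow> card (homO G H H) > 0"
  unfolding homO_def by (rule card_img_pos[OF NN_finite one_NN[OF Ob_sub]])
lemma zT_pos: "H \<in> Ob \<Longrightarrow> card (homT G H H) > 0"
  unfolding homT_def using NN_finite one_NN Ob_sub card_gt_0_iff by blast

lemma class_sum_Ob:
  fixes f :: "'a set \<Rightarrow> rat"
  assumes finv: "\<And>H x. H \<in> Ob \<Longrightarrow> x \<in> carrier G \<Longrightarrow> f (cj H x) = f H"
  shows "(\<Sum>H\<in>Ob. f H * of_nat (card (NN H H)) / of_nat (card (carrier G))) = sum_classes G Ob f"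
  by (rule class_sum) (use finv Ob_cj in auto)

lemma main:
  "has_euler_char Ob (\<lambda>H K. card (homS H K)) \<and> has_euler_char Ob (\<lambda>H K. card (homT G H K))
   \<and> has_euler_char Ob (\<lambda>H K. card (homL G p H K))
   \<and> has_euler_char Ob (\<lambda>H K. card (homF G H K)) \<and> has_euler_char Ob (\<lambda>H K. card (homFt G H K))
   \<and> has_euler_char Ob (\<lambda>H K. card (homO G H K))
   \<and> euler_char Ob (\<lambda>H K. card (homT G H K)) = sum_classes G Ob (\<lambda>H. - of_int (mobius1 G H) / of_nat (card (homT G H H)))
   \<and> euler_char Ob (\<lambda>H K. card (homL G p H K)) = sum_classes G Ob (\<lambda>H. - of_int (mobius1 G H) / of_nat (card (homL G p H H)))
   \<and> euler_char Ob (\<lambda>H K. card (homF G H K)) = sum_classes G Ob (\<lambda>H. - of_int (mobius1 G H) / of_nat (card (homF G H H)))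
   \<and> euler_char Ob (\<lambda>H K. card (homS H K)) = of_nat (card (carrier G)) * euler_char Ob (\<lambda>H K. card (homT G H K))
   \<and> euler_char Ob (\<lambda>H K. card (homFt G H K)) = euler_char Ob (\<lambda>H K. card (homF G H K))
   \<and> euler_char Ob (\<lambda>H K. card (homO G H K)) = euler_char Ob (\<lambda>H K. card (homT G H K))
        + (of_nat p - 1) / of_nat p
          * sum_classes G {C \<in> Ob. cyclic_subgroup G C} (\<lambda>C. 1 / of_nat (card (homO G C C)))"
proof -
  let ?g = "of_nat (card (carrier G)) :: rat"
  have gpos: "?g > 0" using card_G_pos by simp
  obtain wS where wS: "is_weighting Ob (\<lambda>H K. card (homS H K)) wS" using weighting_S by blast
  obtain wT where wT: "is_weighting Ob (\<lambda>H K. card (homT G H K)) wT" using weighting_T by blast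
  obtain wL where wL: "is_weighting Ob (\<lambda>H K. card (homL G p H K)) wL" using weighting_L by blast
  obtain wF where wF: "is_weighting Ob (\<lambda>H K. card (homF G H K)) wF" using weighting_F by blast
  obtain wFt where wFt: "is_weighting Ob (\<lambda>H K. card (homFt G H K)) wFt" using weighting_Ft by blast
  obtain wO where wO: "is_weighting Ob (\<lambda>H K. card (homO G H K)) wO" using weighting_O by blast
  note eS = euler_char_eq[OF finite_Ob wS coweighting_S]
  note eT = euler_char_eq[OF finite_Ob wT coweighting_T]
  note eL = euler_char_eq[OF finite_Ob wL coweighting_L]
  note eF = euler_char_eq[OF finite_Ob wF coweighting_F]
  note eFt = euler_char_eq[OF finite_Ob wFt coweighting_Ft]
  note eO = euler_char_eq[OF finite_Ob wO coweighting_O]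
  have cT: "euler_char Ob (\<lambda>H K. card (homT G H K)) = sum_classes G Ob (\<lambda>H. - of_int (mobius1 G H) / of_nat (card (homT G H H)))"
  proof -
    have "sum_classes G Ob (\<lambda>H. - of_int (mobius1 G H) / of_nat (card (homT G H H)))
        = (\<Sum>H\<in>Ob. (- of_int (mobius1 G H) / of_nat (card (homT G H H))) * of_nat (card (NN H H)) / ?g)"
      by (rule class_sum_Ob[symmetric]) (simp add: mu_cj Ob_subgroup zT_inv)
    also have "\<dots> = (\<Sum>H\<in>Ob. - of_int (mu H) * 1 / ?g)"
      by (rule sum.cong[OF refl]) (use zT_pos in \<open>simp add: card_homT\<close>)
    finally show ?thesis using eT(2) by simp
  qed
  have cL: "euler_char Ob (\<lambda>H K. card (homL G p H K)) = sum_classes G Ob (\<lambda>H. - of_int (mobius1 G H) / of_nat (card (homL G p H H)))"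
  proof -
    have "sum_classes G Ob (\<lambda>H. - of_int (mobius1 G H) / of_nat (card (homL G p H H)))
        = (\<Sum>H\<in>Ob. (- of_int (mobius1 G H) / of_nat (card (homL G p H H))) * of_nat (card (NN H H)) / ?g)"
      by (rule class_sum_Ob[symmetric]) (simp add: mu_cj Ob_subgroup zL_inv)
    also have "\<dots> = (\<Sum>H\<in>Ob. - of_int (mu H) * of_nat (card (Op G p (CC H))) / ?g)"
    proof (rule sum.cong[OF refl])
      fix H assume H: "H \<in> Ob"
      have "of_nat (card (NN H H)) = (of_nat (card (homL G p H H)) * of_nat (card (Op G p (CC H))) :: rat)"
        using card_homL[OF Ob_sub[OF H], of H] by (metis of_nat_mult)
      then show "(- of_int (mobius1 G H) / of_nat (card (homL G p H H))) * of_nat (card (NN H H)) / ?g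
          = - of_int (mu H) * of_nat (card (Op G p (CC H))) / ?g"
        using zL_pos[OF H] by simp
    qed
    finally show ?thesis using eL(2) by simp
  qed
  have cF: "euler_char Ob (\<lambda>H K. card (homF G H K)) = sum_classes G Ob (\<lambda>H. - of_int (mobius1 G H) / of_nat (card (homF G H H)))"
  proof -
    have "sum_classes G Ob (\<lambda>H. - of_int (mobius1 G H) / of_nat (card (homF G H H)))
        = (\<Sum>H\<in>Ob. (- of_int (mobius1 G H) / of_nat (card (homF G H H))) * of_nat (card (NN H H)) / ?g)"
      by (rule class_sum_Ob[symmetric]) (simp add: mu_cj Ob_subgroup zF_inv)
    also have "\<dots> = (\<Sum>H\<in>Ob. - of_int (mu H) * of_nat (card (CC H)) / ?g)"
    proof (rule sum.cong[OF refl])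
      fix H assume H: "H \<in> Ob"
      have "of_nat (card (NN H H)) = (of_nat (card (homF G H H)) * of_nat (card (CC H)) :: rat)"
        using card_homF[OF Ob_sub[OF H], of H] by (metis of_nat_mult)
      then show "(- of_int (mobius1 G H) / of_nat (card (homF G H H))) * of_nat (card (NN H H)) / ?g
          = - of_int (mu H) * of_nat (card (CC H)) / ?g"
        using zF_pos[OF H] by simp
    qed
    finally show ?thesis using eF(2) by simp
  qed
  have cS: "euler_char Ob (\<lambda>H K. card (homS H K)) = ?g * euler_char Ob (\<lambda>H K. card (homT G H K))"
    using eS(2) eT(2) gpos by (simp add: sum_distrib_left)
  have cFt: "euler_char Ob (\<lambda>H K. card (homFt G H K)) = euler_char Ob (\<lambda>H K. card (homF G H K))"
    using eFt(2) eF(2) by simp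
  define Sc where "Sc = {C \<in> Ob. cyclic_subgroup G C}"
  have cO: "euler_char Ob (\<lambda>H K. card (homO G H K)) = euler_char Ob (\<lambda>H K. card (homT G H K))
        + (of_nat p - 1) / of_nat p * sum_classes G Sc (\<lambda>C. 1 / of_nat (card (homO G C C)))"
  proof -
    have p0: "(of_nat p :: rat) > 0" using prime_p prime_gt_0_nat by simp
    have "euler_char Ob (\<lambda>H K. card (homO G H K)) = (\<Sum>H\<in>Ob. - of_int (mu H) * 1 / ?g) + (\<Sum>H\<in>Ob. of_nat (gens H) / ?g)"
      using eO(2) by (simp add: sum.distrib[symmetric] diff_divide_distrib)
    also have "(\<Sum>H\<in>Ob. of_nat (gens H) / ?g) = (\<Sum>H\<in>Sc. of_nat (gens H) / ?g)"
    proof -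
      have "(\<Sum>H\<in>Ob. of_nat (gens H) / ?g) = (\<Sum>H\<in>Ob. if cyclic_subgroup G H then of_nat (gens H) / ?g else 0)"
        by (rule sum.cong[OF refl]) (use gens_cyclic_if in auto)
      also have "\<dots> = (\<Sum>H\<in>Sc. of_nat (gens H) / ?g)"
        unfolding Sc_def using finite_Ob by (simp add: sum.inter_filter)
      finally show ?thesis .
    qed
    also have "\<dots> = (of_nat p - 1) / of_nat p * (\<Sum>C\<in>Sc. (1 / of_nat (card (homO G C C))) * of_nat (card (NN C C)) / ?g)"
    proof -
      have "(\<Sum>H\<in>Sc. of_nat (gens H) / ?g) = (\<Sum>C\<in>Sc. (of_nat p - 1) / of_nat p * ((1 / of_nat (card (homO G C C))) * of_nat (card (NN C C)) / ?g))"
      proof (rule sum.cong[OF refl])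
        fix C assume C: "C \<in> Sc"
        have CO: "C \<in> Ob" and cy: "cyclic_subgroup G C" using C Sc_def by auto
        have g: "of_nat p * of_nat (gens C) = ((of_nat p - 1) * of_nat (card C) :: rat)"
          using gens_cyclic[OF CO cy] prime_p prime_gt_0_nat
          by (metis of_nat_1 of_nat_diff of_nat_mult less_imp_le_nat Suc_leI One_nat_def)
        have n: "of_nat (card (NN C C)) = (of_nat (card (homO G C C)) * of_nat (card C) :: rat)"
          using card_homO[OF Ob_subgroup[OF CO] Ob_sub[OF CO]] by (metis of_nat_mult)
        have "of_nat (gens C) = (of_nat p - 1) * of_nat (card C) / (of_nat p :: rat)"
          using g p0 by (simp add: field_simps)
        then show "of_nat (gens C) / ?g = (of_nat p - 1) / of_nat p * ((1 / of_nat (card (homO G C C))) * of_nat (card (NN C C)) / ?g)"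
          using n zO_pos[OF CO] by simp
      qed
      then show ?thesis by (simp add: sum_distrib_left)
    qed
    also have "(\<Sum>C\<in>Sc. (1 / of_nat (card (homO G C C))) * of_nat (card (NN C C)) / ?g) = sum_classes G Sc (\<lambda>C. 1 / of_nat (card (homO G C C)))"
      by (rule class_sum) (use cyclic_cj Ob_cj zO_inv in \<open>auto simp: Sc_def\<close>)
    finally show ?thesis using eT(2) by simp
  qed
  show ?thesis using eS(1) eT(1) eL(1) eF(1) eFt(1) eO(1) cT cL cF cS cFt cO unfolding Sc_def by blast
qed

end

theorem theorem1p1:
  fixes G :: "('a,'b) monoid_scheme" and p :: nat
  assumes "group G" and "finite (carrier G)" and "Factorial_Ring.prime p"
  defines "Ob \<equiv> nonid_p_subgroups G p"
  defines "zS \<equiv> (\<lambda>H K. card (homS H K))"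
      and "zT \<equiv> (\<lambda>H K. card (homT G H K))"
      and "zL \<equiv> (\<lambda>H K. card (homL G p H K))"
      and "zF \<equiv> (\<lambda>H K. card (homF G H K))"
      and "zFt \<equiv> (\<lambda>H K. card (homFt G H K))"
      and "zO \<equiv> (\<lambda>H K. card (homO G H K))"
  shows "has_euler_char Ob zS \<and> has_euler_char Ob zT \<and> has_euler_char Ob zL
       \<and> has_euler_char Ob zF \<and> has_euler_char Ob zFt \<and> has_euler_char Ob zO
       \<and> euler_char Ob zT = sum_classes G Ob (\<lambda>H. - of_int (mobius1 G H) / of_nat (zT H H))
       \<and> euler_char Ob zL = sum_classes G Ob (\<lambda>H. - of_int (mobius1 G H) / of_nat (zL H H))
       \<and> euler_char Ob zF = sum_classes G Ob (\<lambda>H. - of_int (mobius1 G H) / of_nat (zF H H))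
       \<and> euler_char Ob zS = of_nat (card (carrier G)) * euler_char Ob zT
       \<and> euler_char Ob zFt = euler_char Ob zF
       \<and> euler_char Ob zO = euler_char Ob zT
            + (of_nat p - 1) / of_nat p
              * sum_classes G {C \<in> Ob. cyclic_subgroup G C} (\<lambda>C. 1 / of_nat (zO C C))"
proof -
  interpret E: eg G p using assms(1-3) by (simp add: eg_def eg_axioms_def)
  have O: "Ob = E.Ob" unfolding Ob_def E.Ob_def ..
  show ?thesis using E.main unfolding O zS_def zT_def zL_def zF_def zFt_def zO_def by simp
qed

end
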